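(* For all $z\in(0,+\infty)^{d_1}\times\{0\}^{d_2}$ and all $\alpha\ge0$, \[ \sigma^{\mathcal C}_\alpha(z):=\lim_{\lambda\to\infty,\ \lambda\in\mathbb{R}}\frac1\lambda\mathbb{E}\big[S^{\mathcal C}_\alpha(\lambda z)\big]=\sup_{\lambda>0}\frac1\lambda\mathbb{E}\big[S^{\mathcal C}_\alpha(\lambda z)\big]\in(0,\infty]. \]
   Context: Fix $d_1\ge1$, $d_2\ge0$. Let $\xi$ be a Poisson point process on $\mathbb{R}^{d_1}\times\mathbb{Z}^{d_2}$ with intensity $\mathrm{d}x\otimes\mathrm{d}v$ (Lebesgue measure on $\mathbb{R}^{d_1}$ times counting measure on $\mathbb{Z}^{d_2}$); its points are particles. $\mathrm{Proj}^{d_2}$ is the projection on the $\mathbb{Z}^{d_2}$ coordinates. For $x,y\in\mathbb{R}^{d_1}\times\mathbb{Z}^{d_2}$ and $\alpha\ge0$: $x\prec_\alpha y$ iff $x_i+\alpha^{1/d_1}<y_i$ for all $i\le d_1$; $x\preceq y$ iff $x_i\le y_i$ for all $i\le d_1$. For $z\in(0,+\infty)^{d_1}\times\{0\}^{d_2}$, $\mathcal{C}_\alpha(z)$ is the set of finite sequences $s=(w(1),\dots,w(k))$, $k\ge0$, of particles with $0\preceq w(1)\prec_\alpha\cdots\prec_\alpha w(k)\prec_\alpha z$; with $w(0)=0$, $w(k+1)=z$, $V(s)=\sum_{i=1}^{k+1}\|\mathrm{Proj}^{d_2}(w(i))-\mathrm{Proj}^{d_2}(w(i-1))\|_1$, $R(s)=k$,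 and $S^{\mathcal C}_\alpha(z)=\sup_{s\in\mathcal{C}_\alpha(z)}(R(s)-V(s))$. *)

theory Defs
  imports "HOL-Probability.Probability"
begin

text \<open>Points of R^d1 x Z^d2 are pairs (x, v) with x :: real^'d1 (d1 = CARD('d1))
  and v :: nat => int a lattice vector supported on the coordinates {..<d2}.\<close>

type_synonym 'd1 point = "(real^'d1) \<times> (nat \<Rightarrow> int)"

definition Zd :: "nat \<Rightarrow> (nat \<Rightarrow> int) set" where
  "Zd d2 = {v. \<forall>j\<ge>d2. v j = 0}"

definition l1norm :: "nat \<Rightarrow> (nat \<Rightarrow> int) \<Rightarrow> real" where
  "l1norm d2 v = (\<Sum>j<d2. real_of_int \<bar>v j\<bar>)"

definition poisson_prob :: "real \<Rightarrow> nat \<Rightarrow> real" where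
  "poisson_prob m k = exp (- m) * m ^ k / fact k"

text \<open>Poisson point process on R^d1 x Z^d2 with intensity Lebesgue x counting measure.\<close>

definition poisson_pp :: "'a measure \<Rightarrow> nat \<Rightarrow> ('a \<Rightarrow> ('d1::finite) point set) \<Rightarrow> bool" where
  "poisson_pp M d2 \<xi> \<longleftrightarrow>
     prob_space M \<and>
     (\<forall>\<omega>\<in>space M. \<xi> \<omega> \<subseteq> UNIV \<times> Zd d2 \<and>
        (\<forall>B v. bounded B \<longrightarrow> finite (\<xi> \<omega> \<inter> (B \<times> {v})))) \<and>
     (\<forall>(I::nat set) (Bs::nat \<Rightarrow> (real^'d1) set) vs.
        finite I \<and> (\<forall>i\<in>I. Bs i \<in> sets lborel \<and> bounded (Bs i) \<and> vs i \<in> Zd d2) \<and>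
        disjoint_family_on (\<lambda>i. Bs i \<times> {vs i}) I \<longrightarrow>
        prob_space.indep_vars M (\<lambda>_. count_space UNIV)
          (\<lambda>i \<omega>. card (\<xi> \<omega> \<inter> (Bs i \<times> {vs i}))) I) \<and>
     (\<forall>B v k. B \<in> sets lborel \<and> bounded B \<and> v \<in> Zd d2 \<longrightarrow>
        measure M {\<omega>\<in>space M. card (\<xi> \<omega> \<inter> (B \<times> {v})) = k}
          = poisson_prob (measure lborel B) k)"

definition prec :: "real \<Rightarrow> ('d1::finite) point \<Rightarrow> 'd1 point \<Rightarrow> bool" where
  "prec \<alpha> x y \<longleftrightarrow> (\<forall>i. fst x $ i + \<alpha> powr (1 / real CARD('d1)) < fst y $ i)"

definition preceq :: "('d1::finite) point \<Rightarrow> 'd1 point \<Rightarrow> bool" where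
  "preceq x y \<longleftrightarrow> (\<forall>i. fst x $ i \<le> fst y $ i)"

definition chains :: "real \<Rightarrow> ('d1::finite) point set \<Rightarrow> 'd1 point \<Rightarrow> 'd1 point list set" where
  "chains \<alpha> X z = {ws. set ws \<subseteq> X \<and>
      (ws \<noteq> [] \<longrightarrow> preceq (0, (\<lambda>_. 0)) (hd ws) \<and> prec \<alpha> (last ws) z) \<and>
      (\<forall>i. Suc i < length ws \<longrightarrow> prec \<alpha> (ws ! i) (ws ! Suc i))}"

definition Vcost :: "nat \<Rightarrow> ('d1::finite) point \<Rightarrow> 'd1 point list \<Rightarrow> real" where
  "Vcost d2 z ws = (let ps = (0, (\<lambda>_. 0)) # ws @ [z] in
      (\<Sum>i<length ps - 1. l1norm d2 (\<lambda>j. snd (ps ! Suc i) j - snd (ps ! i) j)))"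

definition SC :: "nat \<Rightarrow> real \<Rightarrow> ('d1::finite) point set \<Rightarrow> 'd1 point \<Rightarrow> ereal" where
  "SC d2 \<alpha> X z = (SUP ws \<in> chains \<alpha> X z. ereal (real (length ws) - Vcost d2 z ws))"

text \<open>E[S^C_alpha(z)] (S^C_alpha(z) >= 0, witnessed by the empty sequence).\<close>
definition ESC :: "'a measure \<Rightarrow> nat \<Rightarrow> ('a \<Rightarrow> ('d1::finite) point set) \<Rightarrow> real \<Rightarrow> 'd1 point \<Rightarrow> ennreal" where
  "ESC M d2 \<xi> \<alpha> z = (\<integral>\<^sup>+ \<omega>. e2ennreal (SC d2 \<alpha> (\<xi> \<omega>) z) \<partial>M)"

end

theory Submission
  imports Defs
begin


definition idx :: "nat \<Rightarrow> ('d1::finite) point \<Rightarrow> ('d1 \<Rightarrow> int) \<times> (nat \<Rightarrow> int)" where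
  "idx n w = ((\<lambda>i. \<lfloor>2^n * fst w $ i\<rfloor>), snd w)"

definition good :: "nat \<Rightarrow> nat \<Rightarrow> ('d1::finite \<Rightarrow> int) \<times> (nat \<Rightarrow> int) \<Rightarrow> bool" where
  "good d2 n j \<longleftrightarrow> (\<forall>i. 0 \<le> fst j i \<and> fst j i < int n * 2^n) \<and> snd j \<in> Zd d2 \<and> (\<forall>l. \<bar>snd j l\<bar> \<le> int n)"

definition sep :: "real \<Rightarrow> nat \<Rightarrow> ('d1::finite \<Rightarrow> int) \<Rightarrow> ('d1 \<Rightarrow> real) \<Rightarrow> bool" where
  "sep c n k y \<longleftrightarrow> (\<forall>i. (real_of_int (k i) + 1) / 2^n + c \<le> y i)"

definition lo :: "nat \<Rightarrow> ('d1::finite \<Rightarrow> int) \<Rightarrow> 'd1 \<Rightarrow> real" where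
  "lo n k = (\<lambda>i. real_of_int (k i) / 2^n)"

definition chainsN :: "nat \<Rightarrow> real \<Rightarrow> nat \<Rightarrow> ('d1::finite) point set \<Rightarrow> 'd1 point \<Rightarrow> 'd1 point list set" where
  "chainsN d2 \<alpha> n X z = {ws. set ws \<subseteq> X \<and> (\<forall>w\<in>set ws. good d2 n (idx n w)) \<and>
     (\<forall>i. Suc i < length ws \<longrightarrow> sep (\<alpha> powr (1 / real CARD('d1))) n (fst (idx n (ws!i))) (lo n (fst (idx n (ws ! Suc i))))) \<and>
     (ws \<noteq> [] \<longrightarrow> sep (\<alpha> powr (1 / real CARD('d1))) n (fst (idx n (last ws))) (\<lambda>i. fst z $ i))}"

definition PN :: "nat \<Rightarrow> real \<Rightarrow> nat \<Rightarrow> ('d1::finite) point set \<Rightarrow> 'd1 point \<Rightarrow> ereal" where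
  "PN d2 \<alpha> n X z = (SUP ws \<in> chainsN d2 \<alpha> n X z. ereal (real (length ws) - Vcost d2 z ws))"

lemma Vcost_snd:
  assumes "map snd ws = map snd ws'"
  shows "Vcost d2 z ws = Vcost d2 z ws'"
proof -
  have len: "length ws = length ws'" using assms by (metis length_map)
  define ps where "ps = (0::real^'a, (\<lambda>_. 0::int)) # ws @ [z]"
  define qs where "qs = (0::real^'a, (\<lambda>_. 0::int)) # ws' @ [z]"
  have m: "map snd ps = map snd qs" using assms unfolding ps_def qs_def by simp
  have lq: "length ps = length qs" unfolding ps_def qs_def using len by simp
  have e: "snd (ps ! i) = snd (qs ! i)" if "i < length ps" for i
  proof -
    have "snd (ps ! i) = map snd ps ! i" using that by simp
    also have "\<dots> = map snd qs ! i" using m by simp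
    also have "\<dots> = snd (qs ! i)" using that lq by simp
    finally show ?thesis .
  qed
  have "(\<Sum>i<length ps - 1. l1norm d2 (\<lambda>j. snd (ps ! Suc i) j - snd (ps ! i) j))
      = (\<Sum>i<length qs - 1. l1norm d2 (\<lambda>j. snd (qs ! Suc i) j - snd (qs ! i) j))"
  proof (rule sum.cong)
    show "{..<length ps - 1} = {..<length qs - 1}" using lq by simp
    fix i assume "i \<in> {..<length qs - 1}"
    then have "Suc i < length ps" "i < length ps" using lq by auto
    then show "l1norm d2 (\<lambda>j. snd (ps ! Suc i) j - snd (ps ! i) j) = l1norm d2 (\<lambda>j. snd (qs ! Suc i) j - snd (qs ! i) j)"
      using e by metis
  qed
  then show ?thesis unfolding Vcost_def Let_def ps_def qs_def .
qed

lemma floor_lo: "real_of_int \<lfloor>2^n * y\<rfloor> / 2^n \<le> (y::real)"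
proof -
  have "real_of_int \<lfloor>2^n * y\<rfloor> \<le> 2^n * y" by simp
  then show ?thesis by (simp add: divide_le_eq mult.commute)
qed

lemma floor_hi: "(y::real) < (real_of_int \<lfloor>2^n * y\<rfloor> + 1) / 2^n"
proof -
  have "2^n * y < real_of_int \<lfloor>2^n * y\<rfloor> + 1" by linarith
  then show ?thesis by (simp add: less_divide_eq mult.commute)
qed

lemma chainsN_sub: "chainsN d2 \<alpha> n X z \<subseteq> chains \<alpha> X z"
proof
  fix ws assume ws: "ws \<in> chainsN d2 \<alpha> n X z"
  let ?c = "\<alpha> powr (1 / real CARD('a))"
  have nn: "0 \<le> fst w $ i" if "w \<in> set ws" for w i
  proof -
    have "0 \<le> \<lfloor>2^n * fst w $ i\<rfloor>" using ws that by (auto simp: chainsN_def good_def idx_def)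
    then have "0 \<le> (2::real)^n * fst w $ i" by linarith
    note h = this
    have p: "(0::real) < 2^n" by simp
    show ?thesis
    proof (rule ccontr)
      assume "\<not> 0 \<le> fst w $ i"
      then have "2^n * fst w $ i < 0" using p by (simp add: mult_pos_neg)
      with h show False by linarith
    qed
  qed
  have pr: "prec \<alpha> w y" if "sep ?c n (fst (idx n w)) (\<lambda>i. fst y $ i)" for w y :: "'a point"
    unfolding prec_def
  proof
    fix i
    have "fst w $ i < (real_of_int \<lfloor>2^n * fst w $ i\<rfloor> + 1) / 2^n" by (rule floor_hi)
    also have "\<dots> + ?c \<le> fst y $ i" using that by (auto simp: sep_def idx_def)
    finally show "fst w $ i + ?c < fst y $ i" by simp
  qed
  have pr2: "prec \<alpha> w y" if "sep ?c n (fst (idx n w)) (lo n (fst (idx n y)))" for w y :: "'a point"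
  proof (rule pr)
    show "sep ?c n (fst (idx n w)) (\<lambda>i. fst y $ i)" using that floor_lo[of n]
      unfolding sep_def lo_def idx_def by (auto intro: order_trans)
  qed
  show "ws \<in> chains \<alpha> X z"
    unfolding chains_def
  proof (intro CollectI conjI impI allI)
    show "set ws \<subseteq> X" using ws by (simp add: chainsN_def)
    assume "ws \<noteq> []"
    then have "hd ws \<in> set ws" by simp
    then show "preceq (0, \<lambda>_. 0) (hd ws)" using nn unfolding preceq_def by simp
    show "prec \<alpha> (last ws) z" apply (rule pr) using ws \<open>ws \<noteq> []\<close> unfolding chainsN_def by blast
  next
    fix i assume "Suc i < length ws"
    then show "prec \<alpha> (ws ! i) (ws ! Suc i)" apply (rule_tac pr2) using ws unfolding chainsN_def by blast
  qed
qed



lemma lo_mono: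
  assumes "m \<le> n"
  shows "real_of_int \<lfloor>2^m * y\<rfloor> / 2^m \<le> real_of_int \<lfloor>2^n * (y::real)\<rfloor> / 2^n"
proof -
  define d where "d = n - m"
  have n: "n = d + m" using assms d_def by simp
  have "2^d * \<lfloor>2^m * y\<rfloor> \<le> \<lfloor>2^n * y\<rfloor>"
  proof (subst le_floor_iff)
    have "real_of_int \<lfloor>2^m * y\<rfloor> \<le> 2^m * y" by simp
    then have "2^d * real_of_int \<lfloor>2^m * y\<rfloor> \<le> 2^d * (2^m * y)" by simp
    then show "real_of_int (2^d * \<lfloor>2^m * y\<rfloor>) \<le> 2^n * y" by (simp add: n power_add)
  qed
  then have "real_of_int (2^d * \<lfloor>2^m * y\<rfloor>) \<le> real_of_int \<lfloor>2^n * y\<rfloor>" by linarith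
  then have "2^d * real_of_int \<lfloor>2^m * y\<rfloor> / 2^n \<le> real_of_int \<lfloor>2^n * y\<rfloor> / 2^n"
    by (simp add: divide_right_mono)
  moreover have "2^d * real_of_int \<lfloor>2^m * y\<rfloor> / 2^n = real_of_int \<lfloor>2^m * y\<rfloor> / 2^m"
    by (simp add: n power_add)
  ultimately show ?thesis by simp
qed

lemma hi_mono:
  assumes "m \<le> n"
  shows "(real_of_int \<lfloor>2^n * (y::real)\<rfloor> + 1) / 2^n \<le> (real_of_int \<lfloor>2^m * y\<rfloor> + 1) / 2^m"
proof -
  define d where "d = n - m"
  have n: "n = d + m" using assms d_def by simp
  have "\<lfloor>2^n * y\<rfloor> < 2^d * (\<lfloor>2^m * y\<rfloor> + 1)"
  proof (subst floor_less_iff)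
    have "2^m * y < real_of_int \<lfloor>2^m * y\<rfloor> + 1" by linarith
    then have "2^d * (2^m * y) < 2^d * (real_of_int \<lfloor>2^m * y\<rfloor> + 1)" by simp
    then show "2^n * y < real_of_int (2^d * (\<lfloor>2^m * y\<rfloor> + 1))" by (simp add: n power_add)
  qed
  then have "\<lfloor>2^n * y\<rfloor> + 1 \<le> 2^d * (\<lfloor>2^m * y\<rfloor> + 1)" by linarith
  then have "real_of_int \<lfloor>2^n * y\<rfloor> + 1 \<le> 2^d * (real_of_int \<lfloor>2^m * y\<rfloor> + 1)"
    by (metis (mono_tags, opaque_lifting) of_int_1 of_int_add of_int_le_iff of_int_mult of_int_numeral of_int_power)
  then have "(real_of_int \<lfloor>2^n * y\<rfloor> + 1) / 2^n \<le> 2^d * (real_of_int \<lfloor>2^m * y\<rfloor> + 1) / 2^n"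
    by (simp add: divide_right_mono)
  moreover have "2^d * (real_of_int \<lfloor>2^m * y\<rfloor> + 1) / 2^n = (real_of_int \<lfloor>2^m * y\<rfloor> + 1) / 2^m"
    by (simp add: n power_add)
  ultimately show ?thesis by simp
qed

lemma floor_nonneg_iff: "0 \<le> \<lfloor>2^n * y\<rfloor> \<longleftrightarrow> 0 \<le> (y::real)"
proof -
  have "0 \<le> \<lfloor>2^n * y\<rfloor> \<longleftrightarrow> 0 \<le> 2^n * y" by linarith
  also have "\<dots> \<longleftrightarrow> 0 \<le> y" by (metis mult_le_cancel_left_pos mult_zero_right zero_less_numeral zero_less_power)
  finally show ?thesis .
qed

lemma floor_bound_iff: "\<lfloor>2^n * y\<rfloor> < int n * 2^n \<longleftrightarrow> (y::real) < real n"
proof -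
  have "\<lfloor>2^n * y\<rfloor> < int n * 2^n \<longleftrightarrow> 2^n * y < real_of_int (int n * 2^n)" by (rule floor_less_iff)
  also have "\<dots> \<longleftrightarrow> 2^n * y < 2^n * real n" by (simp add: mult.commute)
  also have "\<dots> \<longleftrightarrow> y < real n" by simp
  finally show ?thesis .
qed

lemma good_mono:
  assumes "m \<le> n" "good d2 m (idx m w)"
  shows "good d2 n (idx n w)"
proof -
  have "0 \<le> fst w $ i \<and> fst w $ i < real m" for i
    using assms(2) floor_nonneg_iff[of m] floor_bound_iff[of m] by (auto simp: good_def idx_def)
  then have "0 \<le> fst w $ i \<and> fst w $ i < real n" for i
    using assms(1) by (meson less_le_trans of_nat_le_iff)
  then show ?thesis using assms floor_nonneg_iff[of n] floor_bound_iff[of n]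
    by (auto simp: good_def idx_def intro: order_trans)
qed

lemma chainsN_mono:
  assumes "m \<le> n"
  shows "chainsN d2 \<alpha> m X z \<subseteq> chainsN d2 \<alpha> n X z"
proof
  fix ws assume ws: "ws \<in> chainsN d2 \<alpha> m X z"
  let ?c = "\<alpha> powr (1 / real CARD('a))"
  have s1: "sep ?c n (fst (idx n a)) (lo n (fst (idx n b)))" if "sep ?c m (fst (idx m a)) (lo m (fst (idx m b)))" for a b :: "'a point"
    unfolding sep_def lo_def idx_def fst_conv
  proof
    fix i
    have "(real_of_int \<lfloor>2^n * fst a $ i\<rfloor> + 1) / 2^n + ?c \<le> (real_of_int \<lfloor>2^m * fst a $ i\<rfloor> + 1) / 2^m + ?c"
      using hi_mono[OF assms] by simp
    also have "\<dots> \<le> real_of_int \<lfloor>2^m * fst b $ i\<rfloor> / 2^m" using that by (simp add: sep_def lo_def idx_def)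
    also have "\<dots> \<le> real_of_int \<lfloor>2^n * fst b $ i\<rfloor> / 2^n" by (rule lo_mono[OF assms])
    finally show "(real_of_int \<lfloor>2^n * fst a $ i\<rfloor> + 1) / 2^n + ?c \<le> real_of_int \<lfloor>2^n * fst b $ i\<rfloor> / 2^n" .
  qed
  have s2: "sep ?c n (fst (idx n a)) y" if "sep ?c m (fst (idx m a)) y" for a :: "'a point" and y
    unfolding sep_def idx_def fst_conv
  proof
    fix i
    have "(real_of_int \<lfloor>2^n * fst a $ i\<rfloor> + 1) / 2^n + ?c \<le> (real_of_int \<lfloor>2^m * fst a $ i\<rfloor> + 1) / 2^m + ?c"
      using hi_mono[OF assms] by simp
    also have "\<dots> \<le> y i" using that by (simp add: sep_def idx_def)
    finally show "(real_of_int \<lfloor>2^n * fst a $ i\<rfloor> + 1) / 2^n + ?c \<le> y i" .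
  qed
  show "ws \<in> chainsN d2 \<alpha> n X z"
    using ws good_mono[OF assms] s1 s2 unfolding chainsN_def by blast
qed



lemma ev_small:
  assumes "(0::real) < \<delta>"
  shows "eventually (\<lambda>n. 2 / 2^n < \<delta>) sequentially"
proof -
  have "(\<lambda>n. inverse ((2::real) ^ n)) \<longlonglongrightarrow> 0" by (rule LIMSEQ_inverse_realpow_zero) simp
  then have "eventually (\<lambda>n. inverse ((2::real) ^ n) < \<delta> / 2) sequentially"
    using assms by (intro order_tendstoD(2)) auto
  then show ?thesis by eventually_elim (simp add: field_simps)
qed

lemma ev_sep_pt:
  assumes "a + c < (b::real)"
  shows "eventually (\<lambda>n. (real_of_int \<lfloor>2^n * a\<rfloor> + 1) / 2^n + c \<le> real_of_int \<lfloor>2^n * b\<rfloor> / 2^n) sequentially"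
proof -
  have "eventually (\<lambda>n. 2 / 2^n < b - a - c) sequentially" using assms by (intro ev_small) simp
  then show ?thesis
  proof (rule eventually_mono)
  fix n assume n: "2 / 2^n < b - a - c"
  have p: "(0::real) < 2^n" by simp
  have "(real_of_int \<lfloor>2^n * a\<rfloor> + 1) / 2^n = real_of_int \<lfloor>2^n * a\<rfloor> / 2^n + 1 / 2^n"
    by (simp add: add_divide_distrib)
  also have "\<dots> \<le> a + 1 / 2^n" using floor_lo[of n a] by simp
  finally have 1: "(real_of_int \<lfloor>2^n * a\<rfloor> + 1) / 2^n \<le> a + 1 / 2^n" .
  have "2^n * b - 1 \<le> real_of_int \<lfloor>2^n * b\<rfloor>" by linarith
  then have "(2^n * b - 1) / 2^n \<le> real_of_int \<lfloor>2^n * b\<rfloor> / 2^n" using p by (simp add: divide_right_mono)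
  moreover have "(2^n * b - 1) / 2^n = b - 1 / 2^n" using p by (simp add: diff_divide_distrib)
  ultimately have 2: "b - 1 / 2^n \<le> real_of_int \<lfloor>2^n * b\<rfloor> / 2^n" by simp
  have "2 / (2::real)^n = 1 / 2^n + 1 / 2^n" by simp
  then show "(real_of_int \<lfloor>2^n * a\<rfloor> + 1) / 2^n + c \<le> real_of_int \<lfloor>2^n * b\<rfloor> / 2^n"
    using 1 2 n by linarith
  qed
qed

lemma ev_end_pt:
  assumes "a + c < (b::real)"
  shows "eventually (\<lambda>n. (real_of_int \<lfloor>2^n * a\<rfloor> + 1) / 2^n + c \<le> b) sequentially"
  using ev_sep_pt[OF assms] by eventually_elim (use floor_lo in \<open>blast intro: order_trans\<close>)

lemma ev_gt_real: "eventually (\<lambda>n. y < real n) sequentially"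
proof -
  obtain N :: nat where "y < real N" using reals_Archimedean2 by blast
  then show ?thesis unfolding eventually_sequentially by (meson less_le_trans of_nat_le_iff)
qed

lemma chain_nonneg:
  assumes "\<alpha> \<ge> 0" "ws \<in> chains \<alpha> X z" "w \<in> set ws"
  shows "0 \<le> fst w $ l"
proof -
  have c: "0 \<le> \<alpha> powr (1 / real CARD('a))" by simp
  have "\<forall>i. i < length ws \<longrightarrow> 0 \<le> fst (ws ! i) $ l"
  proof
    fix i show "i < length ws \<longrightarrow> 0 \<le> fst (ws ! i) $ l"
    proof (induction i)
      case 0
      show ?case
      proof
        assume "0 < length ws"
        then have "ws \<noteq> []" by auto
        then have "preceq (0, \<lambda>_. 0) (hd ws)" using assms(2) by (simp add: chains_def)
        then show "0 \<le> fst (ws ! 0) $ l" using \<open>ws \<noteq> []\<close> by (simp add: preceq_def hd_conv_nth)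
      qed
    next
      case (Suc i)
      show ?case
      proof
        assume "Suc i < length ws"
        then have "prec \<alpha> (ws ! i) (ws ! Suc i)" using assms(2) by (simp add: chains_def)
        then have "fst (ws ! i) $ l + \<alpha> powr (1 / real CARD('a)) < fst (ws ! Suc i) $ l"
          by (simp add: prec_def)
        moreover have "0 \<le> fst (ws ! i) $ l" using Suc \<open>Suc i < length ws\<close> by simp
        ultimately show "0 \<le> fst (ws ! Suc i) $ l" using c by linarith
      qed
    qed
  qed
  then show ?thesis using assms(3) by (metis in_set_conv_nth)
qed

lemma exists_level:
  assumes "\<alpha> \<ge> 0" "X \<subseteq> UNIV \<times> Zd d2" "ws \<in> chains \<alpha> X z"
  shows "\<exists>n. ws \<in> chainsN d2 \<alpha> n X z"
proof -
  let ?c = "\<alpha> powr (1 / real CARD('a))"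
  have sX: "set ws \<subseteq> X" using assms(3) by (simp add: chains_def)
  have e1: "eventually (\<lambda>n. \<forall>w\<in>set ws. good d2 n (idx n w)) sequentially"
  proof (intro eventually_ball_finite ballI, simp)
    fix w assume w: "w \<in> set ws"
    have vZ: "snd w \<in> Zd d2" using w sX assms(2) by auto
    define B where "B = (\<Sum>l<d2. \<bar>snd w l\<bar>)"
    have bnd: "\<bar>snd w l\<bar> \<le> B" for l
    proof (cases "l < d2")
      case True
      then show ?thesis unfolding B_def by (intro member_le_sum) auto
    next
      case False
      then have "snd w l = 0" using vZ by (simp add: Zd_def)
      then show ?thesis unfolding B_def by (simp add: sum_nonneg)
    qed
    have ev1: "eventually (\<lambda>n. \<forall>i. fst w $ i < real n) sequentially"
      by (intro eventually_all_finite ev_gt_real)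
    have ev2: "eventually (\<lambda>n. B \<le> int n) sequentially"
      using ev_gt_real[of "real_of_int B"] by eventually_elim linarith
    show "eventually (\<lambda>n. good d2 n (idx n w)) sequentially"
      using ev1 ev2
    proof eventually_elim
      case (elim n)
      have "0 \<le> fst w $ i" for i using chain_nonneg[OF assms(1,3) w] .
      then show ?case using elim vZ bnd floor_nonneg_iff[of n] floor_bound_iff[of n]
        by (auto simp: good_def idx_def intro: order_trans)
    qed
  qed
  have fin: "finite {i. Suc i < length ws}" by (rule finite_subset[of _ "{..<length ws}"]) auto
  have "\<forall>i\<in>{i. Suc i < length ws}. eventually (\<lambda>n. sep ?c n (fst (idx n (ws!i))) (lo n (fst (idx n (ws ! Suc i))))) sequentially"
  proof
    fix i assume "i \<in> {i. Suc i < length ws}"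
    then have i: "Suc i < length ws" by simp
    then have "prec \<alpha> (ws ! i) (ws ! Suc i)" using assms(3) by (simp add: chains_def)
    then have "fst (ws ! i) $ l + ?c < fst (ws ! Suc i) $ l" for l by (simp add: prec_def)
    then have "eventually (\<lambda>n. \<forall>l. (real_of_int \<lfloor>2^n * fst (ws ! i) $ l\<rfloor> + 1) / 2^n + ?c \<le> real_of_int \<lfloor>2^n * fst (ws ! Suc i) $ l\<rfloor> / 2^n) sequentially"
      by (intro eventually_all_finite ev_sep_pt)
    then show "eventually (\<lambda>n. sep ?c n (fst (idx n (ws!i))) (lo n (fst (idx n (ws ! Suc i))))) sequentially"
      by eventually_elim (simp add: sep_def lo_def idx_def)
  qed
  then have e2: "eventually (\<lambda>n. \<forall>i\<in>{i. Suc i < length ws}. sep ?c n (fst (idx n (ws!i))) (lo n (fst (idx n (ws ! Suc i))))) sequentially"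
    by (rule eventually_ball_finite[OF fin])
  have e3: "eventually (\<lambda>n. ws \<noteq> [] \<longrightarrow> sep ?c n (fst (idx n (last ws))) (\<lambda>i. fst z $ i)) sequentially"
  proof (cases "ws = []")
    case True then show ?thesis by simp
  next
    case False
    then have "prec \<alpha> (last ws) z" using assms(3) by (simp add: chains_def)
    then have "fst (last ws) $ l + ?c < fst z $ l" for l by (simp add: prec_def)
    then have "eventually (\<lambda>n. \<forall>l. (real_of_int \<lfloor>2^n * fst (last ws) $ l\<rfloor> + 1) / 2^n + ?c \<le> fst z $ l) sequentially"
      by (intro eventually_all_finite ev_end_pt)
    then show ?thesis by eventually_elim (simp add: sep_def idx_def)
  qed
  have "eventually (\<lambda>n. ws \<in> chainsN d2 \<alpha> n X z) sequentially"
    using e1 e2 e3 by eventually_elim (use sX in \<open>auto simp: chainsN_def\<close>)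
  then show ?thesis by (metis eventually_sequentially order_refl)
qed



lemma chainsN_transfer:
  assumes ws: "ws \<in> chainsN d2 \<alpha> n X z" and m: "map (idx n) ws' = map (idx n) ws" and Y: "set ws' \<subseteq> Y"
  shows "ws' \<in> chainsN d2 \<alpha> n Y z"
proof -
  have len: "length ws' = length ws" using m by (metis length_map)
  have i: "idx n (ws' ! i) = idx n (ws ! i)" if "i < length ws" for i
    using m that len by (metis nth_map)
  have g: "good d2 n (idx n w)" if "w \<in> set ws'" for w
  proof -
    have "idx n w \<in> set (map (idx n) ws)" using that m by (metis image_eqI set_map)
    then obtain w0 where "w0 \<in> set ws" "idx n w = idx n w0" by auto
    then show ?thesis using ws by (simp add: chainsN_def)
  qed
  have l: "idx n (last ws') = idx n (last ws)" if "ws \<noteq> []"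
  proof -
    have "ws' \<noteq> []" using that len by auto
    then have "idx n (last ws') = last (map (idx n) ws')" by (simp add: last_map)
    also have "\<dots> = last (map (idx n) ws)" using m by simp
    also have "\<dots> = idx n (last ws)" using that by (simp add: last_map)
    finally show ?thesis .
  qed
  show ?thesis unfolding chainsN_def
  proof (intro CollectI conjI allI impI ballI)
    show "set ws' \<subseteq> Y" by (rule Y)
  next
    fix w assume "w \<in> set ws'" then show "good d2 n (idx n w)" by (rule g)
  next
    fix j assume j: "Suc j < length ws'"
    then show "sep (\<alpha> powr (1 / real CARD('a))) n (fst (idx n (ws' ! j))) (lo n (fst (idx n (ws' ! Suc j))))"
      using ws len i[of j] i[of "Suc j"] by (simp add: chainsN_def)
  next
    assume "ws' \<noteq> []"
    then have "ws \<noteq> []" using len by auto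
    then show "sep (\<alpha> powr (1 / real CARD('a))) n (fst (idx n (last ws'))) (($) (fst z))"
      using ws l by (simp add: chainsN_def)
  qed
qed

lemma PN_le:
  assumes "\<forall>w\<in>X. good d2 n (idx n w) \<longrightarrow> (\<exists>y\<in>Y. idx n y = idx n w)"
  shows "PN d2 \<alpha> n X z \<le> PN d2 \<alpha> n Y z"
  unfolding PN_def
proof (rule SUP_mono)
  fix ws assume ws: "ws \<in> chainsN d2 \<alpha> n X z"
  define f where "f w = (SOME y. y \<in> Y \<and> idx n y = idx n w)" for w
  have f: "f w \<in> Y \<and> idx n (f w) = idx n w" if "w \<in> set ws" for w
  proof -
    have "w \<in> X" "good d2 n (idx n w)" using ws that by (auto simp: chainsN_def)
    then have "\<exists>y. y \<in> Y \<and> idx n y = idx n w" using assms by blast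
    then show ?thesis unfolding f_def by (rule someI_ex)
  qed
  have m: "map (idx n) (map f ws) = map (idx n) ws" using f by simp
  have s: "map snd (map f ws) = map snd ws"
  proof -
    have "snd (f w) = snd w" if "w \<in> set ws" for w
      using f[OF that] by (metis idx_def snd_conv)
    then show ?thesis by simp
  qed
  have "map f ws \<in> chainsN d2 \<alpha> n Y z"
  proof (rule chainsN_transfer[OF ws m])
    show "set (map f ws) \<subseteq> Y" using f by auto
  qed
  moreover have "ereal (real (length ws) - Vcost d2 z ws) \<le> ereal (real (length (map f ws)) - Vcost d2 z (map f ws))"
    using Vcost_snd[OF s] by simp
  ultimately show "\<exists>ws'\<in>chainsN d2 \<alpha> n Y z. ereal (real (length ws) - Vcost d2 z ws) \<le> ereal (real (length ws') - Vcost d2 z ws')"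
    by blast
qed

lemma PN_incseq: "incseq (\<lambda>n. PN d2 \<alpha> n X z)"
  unfolding incseq_def PN_def by (intro allI impI SUP_subset_mono chainsN_mono order_refl)

lemma SC_SUP:
  assumes "\<alpha> \<ge> 0" "X \<subseteq> UNIV \<times> Zd d2"
  shows "SC d2 \<alpha> X z = (SUP n. PN d2 \<alpha> n X z)"
proof (rule antisym)
  show "SC d2 \<alpha> X z \<le> (SUP n. PN d2 \<alpha> n X z)"
    unfolding SC_def
  proof (rule SUP_least)
    fix ws assume "ws \<in> chains \<alpha> X z"
    then obtain n where n: "ws \<in> chainsN d2 \<alpha> n X z" using exists_level[OF assms] by blast
    then have "ereal (real (length ws) - Vcost d2 z ws) \<le> PN d2 \<alpha> n X z"
      unfolding PN_def by (rule SUP_upper)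
    also have "\<dots> \<le> (SUP n. PN d2 \<alpha> n X z)" by (rule SUP_upper) simp
    finally show "ereal (real (length ws) - Vcost d2 z ws) \<le> (SUP n. PN d2 \<alpha> n X z)" .
  qed
  show "(SUP n. PN d2 \<alpha> n X z) \<le> SC d2 \<alpha> X z"
    unfolding SC_def PN_def by (intro SUP_least SUP_subset_mono chainsN_sub order_refl)
qed

lemma e2ennreal_SUP:
  fixes f :: "nat \<Rightarrow> ereal"
  shows "e2ennreal (SUP n. f n) = (SUP n. e2ennreal (f n))"
proof -
  have "e2ennreal (Sup (range f)) = (SUP s\<in>range f. e2ennreal s)"
  proof (rule continuous_at_Sup_mono)
    show "mono e2ennreal" by (simp add: mono_def e2ennreal_mono)
    show "continuous (at_left (Sup (range f))) e2ennreal" by (rule continuous_at_e2ennreal)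
  qed auto
  then show ?thesis by (simp add: image_image)
qed

lemma e2_SC_SUP:
  assumes "\<alpha> \<ge> 0" "X \<subseteq> UNIV \<times> Zd d2"
  shows "e2ennreal (SC d2 \<alpha> X z) = (SUP n. e2ennreal (PN d2 \<alpha> n X z))"
  using SC_SUP[OF assms] e2ennreal_SUP by simp



lemma chains_alt: "ws \<in> chains \<alpha> X z \<longleftrightarrow> set ws \<subseteq> X \<and>
   (ws \<noteq> [] \<longrightarrow> preceq (0, (\<lambda>_. 0)) (hd ws) \<and> prec \<alpha> (last ws) z) \<and> successively (prec \<alpha>) ws"
  unfolding chains_def successively_conv_nth by simp

fun pcost :: "nat \<Rightarrow> (nat \<Rightarrow> int) list \<Rightarrow> real" where
  "pcost d2 (a # b # r) = l1norm d2 (\<lambda>j. b j - a j) + pcost d2 (b # r)"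
| "pcost d2 _ = 0"

lemma l1norm_nonneg: "0 \<le> l1norm d2 v"
  unfolding l1norm_def by (simp add: sum_nonneg)

lemma l1norm_tri: "l1norm d2 (\<lambda>j. b j - a j) \<le> l1norm d2 (\<lambda>j. m j - a j) + l1norm d2 (\<lambda>j. b j - m j)"
  unfolding l1norm_def sum.distrib[symmetric] by (intro sum_mono) linarith

lemma sum_pcost:
  "(\<Sum>i<length ps - 1. l1norm d2 (\<lambda>j. snd (ps ! Suc i) j - snd (ps ! i) j)) = pcost d2 (map snd ps)"
proof (induction ps rule: induct_list012)
  case (3 a b r)
  have "(\<Sum>i<length (a # b # r) - 1. l1norm d2 (\<lambda>j. snd ((a # b # r) ! Suc i) j - snd ((a # b # r) ! i) j))
     = (\<Sum>i<Suc (length (b # r) - 1). l1norm d2 (\<lambda>j. snd ((a # b # r) ! Suc i) j - snd ((a # b # r) ! i) j))"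
    by simp
  also have "\<dots> = l1norm d2 (\<lambda>j. snd b j - snd a j) + (\<Sum>i<length (b # r) - 1. l1norm d2 (\<lambda>j. snd ((b # r) ! Suc i) j - snd ((b # r) ! i) j))"
    by (subst sum.lessThan_Suc_shift) simp
  also have "\<dots> = pcost d2 (map snd (a # b # r))" using 3(2) by simp
  finally show ?case .
qed simp_all

lemma Vcost_pcost: "Vcost d2 z ws = pcost d2 (map snd ((0, (\<lambda>_. 0)) # ws @ [z]))"
  unfolding Vcost_def Let_def sum_pcost ..

lemma pcost_split: "pcost d2 (xs @ [m]) + pcost d2 (m # ys) = pcost d2 (xs @ m # ys)"
proof (induction xs)
  case Nil then show ?case by simp
next
  case (Cons a xs)
  then show ?case by (cases xs) auto
qed

lemma pcost_insert: "pcost d2 (xs @ ys) \<le> pcost d2 (xs @ m # ys)"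
proof (induction xs)
  case Nil
  then show ?case by (cases ys) (auto simp: l1norm_nonneg)
next
  case (Cons a xs)
  show ?case
  proof (cases xs)
    case Nil
    then show ?thesis
    proof (cases ys)
      case Nil then show ?thesis using \<open>xs = []\<close> by (simp add: l1norm_nonneg)
    next
      case (Cons b r)
      then show ?thesis using \<open>xs = []\<close> l1norm_tri[of d2 b a m] by simp
    qed
  next
    case (Cons a' r)
    then show ?thesis using Cons.IH by simp
  qed
qed

definition shift :: "real^'d1 \<Rightarrow> ('d1::finite) point set \<Rightarrow> 'd1 point set" where
  "shift a X = (\<lambda>w. (fst w - a, snd w)) ` X"

lemma chain_concat:
  assumes a: "\<forall>i. 0 \<le> a $ i" and b: "\<forall>i. 0 \<le> b $ i"
    and ws1: "ws1 \<in> chains \<alpha> X (a, \<lambda>_. 0)" and ws2: "ws2 \<in> chains \<alpha> (shift a X) (b, \<lambda>_. 0)"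
  shows "ws1 @ map (\<lambda>w. (fst w + a, snd w)) ws2 \<in> chains \<alpha> X (a + b, \<lambda>_. 0)"
    and "Vcost d2 (a + b, \<lambda>_. 0) (ws1 @ map (\<lambda>w. (fst w + a, snd w)) ws2)
          \<le> Vcost d2 (a, \<lambda>_. 0) ws1 + Vcost d2 (b, \<lambda>_. 0) ws2"
proof -
  let ?u = "\<lambda>w::'a point. (fst w + a, snd w)"
  let ?c = "\<alpha> powr (1 / real CARD('a))"
  have s1: "set ws1 \<subseteq> X" "ws1 \<noteq> [] \<Longrightarrow> preceq (0, \<lambda>_. 0) (hd ws1) \<and> prec \<alpha> (last ws1) (a, \<lambda>_. 0)"
     "successively (prec \<alpha>) ws1" using ws1 unfolding chains_alt by auto
  have s2: "set ws2 \<subseteq> shift a X" "ws2 \<noteq> [] \<Longrightarrow> preceq (0, \<lambda>_. 0) (hd ws2) \<and> prec \<alpha> (last ws2) (b, \<lambda>_. 0)"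
     "successively (prec \<alpha>) ws2" using ws2 unfolding chains_alt by auto
  have uX: "?u w \<in> X" if "w \<in> shift a X" for w using that by (auto simp: shift_def)
  have pu: "prec \<alpha> (?u w) (?u w') \<longleftrightarrow> prec \<alpha> w w'" for w w'
    by (simp add: prec_def)
  show ch: "ws1 @ map ?u ws2 \<in> chains \<alpha> X (a + b, \<lambda>_. 0)"
    unfolding chains_alt
  proof (intro conjI impI)
    show "set (ws1 @ map ?u ws2) \<subseteq> X" using s1(1) s2(1) uX by auto
    show "successively (prec \<alpha>) (ws1 @ map ?u ws2)"
      unfolding successively_append_iff successively_map pu
    proof (intro conjI)
      show "successively (prec \<alpha>) ws1" by (rule s1(3))
      show "successively (prec \<alpha>) ws2" by (rule s2(3))
      show "ws1 = [] \<or> map ?u ws2 = [] \<or> prec \<alpha> (last ws1) (hd (map ?u ws2))"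
      proof (cases "ws1 = [] \<or> ws2 = []")
        case False
        then have "prec \<alpha> (last ws1) (a, \<lambda>_. 0)" "preceq (0, \<lambda>_. 0) (hd ws2)" using s1(2) s2(2) by auto
        then have "prec \<alpha> (last ws1) (hd (map ?u ws2))" using False
          unfolding prec_def preceq_def by (auto simp: hd_map intro: less_le_trans)
        then show ?thesis by simp
      qed auto
    qed
    assume ne: "ws1 @ map ?u ws2 \<noteq> []"
    show "preceq (0, \<lambda>_. 0) (hd (ws1 @ map ?u ws2))"
    proof (cases "ws1 = []")
      case True
      then have "ws2 \<noteq> []" using ne by auto
      then have "preceq (0, \<lambda>_. 0) (hd ws2)" using s2(2) by auto
      then show ?thesis using True \<open>ws2 \<noteq> []\<close> a unfolding preceq_def by (auto simp: hd_map add_nonneg_nonneg)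
    next
      case False
      then show ?thesis using s1(2) by auto
    qed
    show "prec \<alpha> (last (ws1 @ map ?u ws2)) (a + b, \<lambda>_. 0)"
    proof (cases "ws2 = []")
      case True
      then have "ws1 \<noteq> []" using ne by auto
      then have "prec \<alpha> (last ws1) (a, \<lambda>_. 0)" using s1(2) by auto
      then show ?thesis using True b unfolding prec_def by (auto intro: less_le_trans add_increasing2)
    next
      case False
      then have "prec \<alpha> (last ws2) (b, \<lambda>_. 0)" using s2(2) by auto
      then show ?thesis using False unfolding prec_def by (auto simp: last_map add.commute)
    qed
  qed
  let ?z = "\<lambda>_::nat. 0::int"
  have "Vcost d2 (a + b, ?z) (ws1 @ map ?u ws2)
      = pcost d2 ((?z # map snd ws1) @ (map snd ws2 @ [?z]))"
    unfolding Vcost_pcost by (simp add: comp_def)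
  also have "\<dots> \<le> pcost d2 ((?z # map snd ws1) @ ?z # (map snd ws2 @ [?z]))" by (rule pcost_insert)
  also have "\<dots> = pcost d2 ((?z # map snd ws1) @ [?z]) + pcost d2 (?z # (map snd ws2 @ [?z]))"
    by (rule pcost_split[symmetric])
  also have "\<dots> = Vcost d2 (a, ?z) ws1 + Vcost d2 (b, ?z) ws2"
    unfolding Vcost_pcost by simp
  finally show "Vcost d2 (a + b, \<lambda>_. 0) (ws1 @ map ?u ws2) \<le> Vcost d2 (a, \<lambda>_. 0) ws1 + Vcost d2 (b, \<lambda>_. 0) ws2" .
qed



lemma nil_chain: "[] \<in> chains \<alpha> X z" by (simp add: chains_def)

lemma Vcost_nil0: "Vcost d2 (a, \<lambda>_. 0) [] = 0"
  unfolding Vcost_pcost by (simp add: l1norm_def)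

lemma SC_nonneg: "0 \<le> SC d2 \<alpha> X (a, \<lambda>_. 0)"
proof -
  have "ereal (real (length []) - Vcost d2 (a, \<lambda>_. 0) []) \<le> SC d2 \<alpha> X (a, \<lambda>_. 0)"
    unfolding SC_def using SUP_upper[OF nil_chain, of "\<lambda>ws. ereal (real (length ws) - Vcost d2 (a, \<lambda>_. 0) ws)"] by simp
  then show ?thesis by (simp add: Vcost_nil0 zero_ereal_def)
qed

lemma SC_superadd_ereal:
  assumes a: "\<forall>i. 0 \<le> a $ i" and b: "\<forall>i. 0 \<le> b $ i"
  shows "SC d2 \<alpha> X (a, \<lambda>_. 0) + SC d2 \<alpha> (shift a X) (b, \<lambda>_. 0) \<le> SC d2 \<alpha> X (a + b, \<lambda>_. 0)"
proof -
  let ?f = "\<lambda>ws. ereal (real (length ws) - Vcost d2 (a, \<lambda>_. 0) ws)"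
  let ?g = "\<lambda>ws. ereal (real (length ws) - Vcost d2 (b, \<lambda>_. 0) ws)"
  let ?A = "chains \<alpha> X (a, \<lambda>_. 0)" and ?B = "chains \<alpha> (shift a X) (b, \<lambda>_. 0)"
  have nA: "?A \<noteq> {}" and nB: "?B \<noteq> {}" by (metis empty_iff nil_chain)+
  have S2: "SC d2 \<alpha> (shift a X) (b, \<lambda>_. 0) \<noteq> -\<infinity>" using SC_nonneg[of d2 \<alpha> "shift a X" b] by auto
  have "SC d2 \<alpha> X (a, \<lambda>_. 0) + SC d2 \<alpha> (shift a X) (b, \<lambda>_. 0)
      = (SUP w1\<in>?A. ?f w1 + SC d2 \<alpha> (shift a X) (b, \<lambda>_. 0))"
    unfolding SC_def[of d2 \<alpha> X] using SUP_ereal_add_left[OF nA S2, of ?f] by simp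
  also have "\<dots> \<le> SC d2 \<alpha> X (a + b, \<lambda>_. 0)"
  proof (rule SUP_least)
    fix w1 assume w1: "w1 \<in> ?A"
    have "?f w1 + SC d2 \<alpha> (shift a X) (b, \<lambda>_. 0) = (SUP w2\<in>?B. ?f w1 + ?g w2)"
      unfolding SC_def by (rule SUP_ereal_add_right[symmetric, OF nB]) simp
    also have "\<dots> \<le> SC d2 \<alpha> X (a + b, \<lambda>_. 0)"
    proof (rule SUP_least)
      fix w2 assume w2: "w2 \<in> ?B"
      let ?w = "w1 @ map (\<lambda>w. (fst w + a, snd w)) w2"
      have "?f w1 + ?g w2 \<le> ereal (real (length ?w) - Vcost d2 (a + b, \<lambda>_. 0) ?w)"
        using chain_concat(2)[OF a b w1 w2, of d2] by simp
      also have "\<dots> \<le> SC d2 \<alpha> X (a + b, \<lambda>_. 0)"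
        unfolding SC_def by (rule SUP_upper) (rule chain_concat(1)[OF a b w1 w2])
      finally show "?f w1 + ?g w2 \<le> SC d2 \<alpha> X (a + b, \<lambda>_. 0)" .
    qed
    finally show "?f w1 + SC d2 \<alpha> (shift a X) (b, \<lambda>_. 0) \<le> SC d2 \<alpha> X (a + b, \<lambda>_. 0)" .
  qed
  finally show ?thesis .
qed

lemma e2ennreal_add:
  assumes "0 \<le> x" "0 \<le> y"
  shows "e2ennreal (x + y) = e2ennreal x + e2ennreal y"
  using assms
  by (cases x; cases y) (auto simp: ennreal_plus)

lemma SC_superadd:
  assumes a: "\<forall>i. 0 \<le> a $ i" and b: "\<forall>i. 0 \<le> b $ i"
  shows "e2ennreal (SC d2 \<alpha> X (a, \<lambda>_. 0)) + e2ennreal (SC d2 \<alpha> (shift a X) (b, \<lambda>_. 0))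
     \<le> e2ennreal (SC d2 \<alpha> X (a + b, \<lambda>_. 0))"
  using SC_superadd_ereal[OF a b, of d2 \<alpha> X] e2ennreal_add[OF SC_nonneg SC_nonneg]
  by (metis e2ennreal_mono)



definition Jn :: "nat \<Rightarrow> nat \<Rightarrow> (('d1::finite \<Rightarrow> int) \<times> (nat \<Rightarrow> int)) set" where
  "Jn d2 n = {j. good d2 n j}"

definition canon :: "nat \<Rightarrow> ('d1::finite \<Rightarrow> int) \<times> (nat \<Rightarrow> int) \<Rightarrow> 'd1 point" where
  "canon n j = ((\<chi> i. real_of_int (fst j i) / 2^n), snd j)"

definition Rep :: "nat \<Rightarrow> nat \<Rightarrow> (('d1::finite \<Rightarrow> int) \<times> (nat \<Rightarrow> int) \<Rightarrow> nat) \<Rightarrow> 'd1 point set" where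
  "Rep d2 n oc = canon n ` {j \<in> Jn d2 n. 0 < oc j}"

definition cellB :: "nat \<Rightarrow> real^'d1 \<Rightarrow> ('d1::finite \<Rightarrow> int) \<Rightarrow> (real^'d1) set" where
  "cellB n a k = {p. \<forall>i. \<lfloor>2^n * (p$i - a$i)\<rfloor> = k i}"

definition Occ :: "nat \<Rightarrow> nat \<Rightarrow> real^'d1 \<Rightarrow> ('d1::finite) point set \<Rightarrow> ('d1 \<Rightarrow> int) \<times> (nat \<Rightarrow> int) \<Rightarrow> nat" where
  "Occ d2 n a X = restrict (\<lambda>j. card (X \<inter> (cellB n a (fst j) \<times> {snd j}))) (Jn d2 n)"

lemma finite_Jn: "finite (Jn d2 n :: (('d1::finite \<Rightarrow> int) \<times> (nat \<Rightarrow> int)) set)"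
proof -
  define K :: "('d1 \<Rightarrow> int) set" where "K = PiE UNIV (\<lambda>_. {0..<int n * 2^n})"
  define V where "V = (\<lambda>f::nat \<Rightarrow> int. \<lambda>l. if l < d2 then f l else 0) ` PiE {..<d2} (\<lambda>_. {- int n..int n})"
  have fK: "finite K" unfolding K_def by (intro finite_PiE) auto
  have fV: "finite V" unfolding V_def by (intro finite_imageI finite_PiE) auto
  have "Jn d2 n \<subseteq> K \<times> V"
  proof
    fix j :: "('d1 \<Rightarrow> int) \<times> (nat \<Rightarrow> int)" assume "j \<in> Jn d2 n"
    then have g: "good d2 n j" by (simp add: Jn_def)
    have "fst j \<in> K" using g unfolding K_def good_def by (auto simp: PiE_UNIV_domain)
    moreover have "snd j \<in> V"
    proof -
      have "restrict (snd j) {..<d2} \<in> PiE {..<d2} (\<lambda>_. {- int n..int n})"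
        using g unfolding good_def by (auto simp: abs_le_iff) (metis minus_le_iff)
      moreover have "snd j = (\<lambda>l. if l < d2 then restrict (snd j) {..<d2} l else 0)"
        using g unfolding good_def Zd_def by (auto simp: fun_eq_iff)
      ultimately show ?thesis unfolding V_def by blast
    qed
    ultimately show "j \<in> K \<times> V" by (cases j) auto
  qed
  then show ?thesis using fK fV by (meson finite_SigmaI finite_subset)
qed

lemma idx_canon: "idx n (canon n j) = j"
  unfolding idx_def canon_def by (cases j) auto

lemma cell0: "w \<in> cellB n 0 (fst j) \<times> {snd j} \<longleftrightarrow> idx n w = j"
  unfolding cellB_def idx_def by (cases j; cases w) (auto simp: fun_eq_iff)

lemma PN_Rep:
  assumes fin: "\<forall>j\<in>Jn d2 n. finite (X \<inter> (cellB n 0 (fst j) \<times> {snd j}))"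
  shows "PN d2 \<alpha> n X z = PN d2 \<alpha> n (Rep d2 n (Occ d2 n 0 X)) z"
proof (rule antisym; rule PN_le; intro ballI impI)
  fix w assume w: "w \<in> X" and g: "good d2 n (idx n w)"
  let ?j = "idx n w"
  have j: "?j \<in> Jn d2 n" using g by (simp add: Jn_def)
  have "w \<in> X \<inter> (cellB n 0 (fst ?j) \<times> {snd ?j})" using w cell0[of w n ?j] by simp
  then have "0 < Occ d2 n 0 X ?j" using fin j unfolding Occ_def by (auto simp: card_gt_0_iff)
  then have "canon n ?j \<in> Rep d2 n (Occ d2 n 0 X)" using j unfolding Rep_def by blast
  then show "\<exists>y\<in>Rep d2 n (Occ d2 n 0 X). idx n y = idx n w" using idx_canon by metis
next
  fix y assume y: "y \<in> Rep d2 n (Occ d2 n 0 X)" and g: "good d2 n (idx n y)"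
  then obtain j where j: "j \<in> Jn d2 n" "0 < Occ d2 n 0 X j" and yj: "y = canon n j" unfolding Rep_def by blast
  then have "X \<inter> (cellB n 0 (fst j) \<times> {snd j}) \<noteq> {}" unfolding Occ_def by (auto simp: card_gt_0_iff)
  then obtain w where "w \<in> X" "idx n w = j" using cell0 by blast
  then show "\<exists>w\<in>X. idx n w = idx n y" using yj idx_canon by metis
qed

lemma shift_cell: "shift a X \<inter> (cellB n 0 k \<times> {v}) = (\<lambda>w. (fst w - a, snd w)) ` (X \<inter> (cellB n a k \<times> {v}))"
  unfolding shift_def cellB_def by auto

lemma Occ_shift: "Occ d2 n 0 (shift a X) = Occ d2 n a X"
proof -
  have "inj (\<lambda>w::'a point. (fst w - a, snd w))" by (auto simp: inj_def prod_eq_iff)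
  then show ?thesis unfolding Occ_def shift_cell
    by (intro restrict_ext) (simp add: card_image inj_on_subset)
qed

lemma fin_shift: "finite (X \<inter> (cellB n a k \<times> {v})) \<Longrightarrow> finite (shift a X \<inter> (cellB n 0 k \<times> {v}))"
  unfolding shift_cell by simp



lemma cellB_borel: "cellB n a k \<in> sets lborel"
proof -
  have "cellB n a k = {p \<in> space borel. \<forall>i. \<lfloor>2^n * (p$i - a$i)\<rfloor> = k i}"
    unfolding cellB_def by simp
  also have "\<dots> \<in> sets borel" by measurable
  finally show ?thesis by simp
qed

lemma cellB_bounded: "bounded (cellB n a k)"
proof -
  have "cellB n a k \<subseteq> cbox (\<chi> i. a$i + real_of_int (k i) / 2^n) (\<chi> i. a$i + (real_of_int (k i) + 1) / 2^n)"
  proof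
    fix p assume "p \<in> cellB n a k"
    then have f: "\<lfloor>2^n * (p$i - a$i)\<rfloor> = k i" for i unfolding cellB_def by simp
    have "a$i + real_of_int (k i) / 2^n \<le> p$i \<and> p$i \<le> a$i + (real_of_int (k i) + 1) / 2^n" for i
      using floor_lo[of n "p$i - a$i"] floor_hi[of "p$i - a$i" n] f[of i] by auto
    then show "p \<in> cbox (\<chi> i. a$i + real_of_int (k i) / 2^n) (\<chi> i. a$i + (real_of_int (k i) + 1) / 2^n)"
      by (simp add: mem_box_cart)
  qed
  then show ?thesis by (rule bounded_subset[OF bounded_cbox])
qed

lemma cellB_measure: "measure lborel (cellB n a k) = measure lborel (cellB n 0 k)"
proof -
  have "emeasure lborel (cellB n 0 k) = emeasure (distr lborel borel ((+) (-a))) (cellB n 0 k)"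
    by (simp add: lborel_distr_plus)
  also have "\<dots> = emeasure lborel ((+) (-a) -` cellB n 0 k)"
    using cellB_borel[of n 0 k] by (subst emeasure_distr) auto
  also have "(+) (-a) -` cellB n 0 k = cellB n a k"
    unfolding cellB_def by auto
  finally show ?thesis by (simp add: measure_def)
qed

lemma cellB_disj:
  assumes "(k, v) \<noteq> (k', v')"
  shows "(cellB n a k \<times> {v}) \<inter> (cellB n a k' \<times> {v'}) = {}"
  using assms unfolding cellB_def by (auto simp: fun_eq_iff)



lemma pp_count:
  assumes "poisson_pp M d2 \<xi>" "B \<in> sets lborel" "bounded B" "v \<in> Zd d2"
  shows "measure M {\<omega>\<in>space M. card (\<xi> \<omega> \<inter> (B \<times> {v})) = k} = poisson_prob (measure lborel B) k"
proof -
  have "\<forall>B v k. B \<in> sets lborel \<and> bounded B \<and> v \<in> Zd d2 \<longrightarrow>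
        measure M {\<omega>\<in>space M. card (\<xi> \<omega> \<inter> (B \<times> {v})) = k} = poisson_prob (measure lborel B) k"
    using assms(1) unfolding poisson_pp_def by (rule conjunct2[THEN conjunct2[THEN conjunct2]])
  then show ?thesis using assms(2-4) by simp
qed

lemma pp_indep:
  fixes \<xi> :: "'b \<Rightarrow> ('d1::finite) point set" and I :: "nat set" and Bs :: "nat \<Rightarrow> (real^'d1) set" and vs :: "nat \<Rightarrow> nat \<Rightarrow> int"
  assumes "poisson_pp M d2 \<xi>" "finite I" "\<forall>i\<in>I. Bs i \<in> sets lborel \<and> bounded (Bs i) \<and> vs i \<in> Zd d2"
    "disjoint_family_on (\<lambda>i. Bs i \<times> {vs i}) I"
  shows "prob_space.indep_vars M (\<lambda>_. count_space UNIV) (\<lambda>i \<omega>. card (\<xi> \<omega> \<inter> (Bs i \<times> {vs i}))) I"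
proof -
  have "\<forall>(I::nat set) (Bs::nat \<Rightarrow> (real^'d1) set) vs.
        finite I \<and> (\<forall>i\<in>I. Bs i \<in> sets lborel \<and> bounded (Bs i) \<and> vs i \<in> Zd d2) \<and>
        disjoint_family_on (\<lambda>i. Bs i \<times> {vs i}) I \<longrightarrow>
        prob_space.indep_vars M (\<lambda>_. count_space UNIV) (\<lambda>i \<omega>. card (\<xi> \<omega> \<inter> (Bs i \<times> {vs i}))) I"
    using assms(1) unfolding poisson_pp_def by (rule conjunct1[OF conjunct2[THEN conjunct2]])
  then have "finite I \<and> (\<forall>i\<in>I. Bs i \<in> sets lborel \<and> bounded (Bs i) \<and> vs i \<in> Zd d2) \<and>
        disjoint_family_on (\<lambda>i. Bs i \<times> {vs i}) I \<longrightarrow>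
        prob_space.indep_vars M (\<lambda>_. count_space UNIV) (\<lambda>i \<omega>. card (\<xi> \<omega> \<inter> (Bs i \<times> {vs i}))) I"
    by (rule spec[of _ vs, OF spec[of _ Bs, OF spec[of _ I]]])
  then show ?thesis by (rule mp) (intro conjI assms(2-4))
qed

lemma core_one:
  fixes N :: nat and h :: "nat \<Rightarrow> ('d1::finite \<Rightarrow> int) \<times> (nat \<Rightarrow> int)" and \<xi> :: "'b \<Rightarrow> 'd1 point set"
  assumes pp: "poisson_pp M d2 \<xi>"
    and h: "bij_betw h {0..<N} (Jn d2 n :: (('d1 \<Rightarrow> int) \<times> (nat \<Rightarrow> int)) set)" and N: "0 < N"
  shows "(\<lambda>\<omega>. Occ d2 n a (\<xi> \<omega>)) \<in> measurable M (count_space (PiE (Jn d2 n) (\<lambda>_. UNIV)))"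
    and "oc \<in> PiE (Jn d2 n) (\<lambda>_. UNIV) \<Longrightarrow>
      emeasure (distr M (count_space (PiE (Jn d2 n) (\<lambda>_. UNIV))) (\<lambda>\<omega>. Occ d2 n a (\<xi> \<omega>))) {oc}
       = ennreal (\<Prod>i\<in>{0..<N}. poisson_prob (measure lborel (cellB n 0 (fst (h i)))) (oc (h i)))"
proof -
  let ?J = "Jn d2 n :: (('d1 \<Rightarrow> int) \<times> (nat \<Rightarrow> int)) set"
  let ?A = "PiE ?J (\<lambda>_. UNIV :: nat set)"
  interpret prob_space M using pp unfolding poisson_pp_def by (rule conjunct1)
  define X where "X i \<omega> = card (\<xi> \<omega> \<inter> (cellB n a (fst (h i)) \<times> {snd (h i)}))" for i \<omega>
  have hJ: "h i \<in> ?J" if "i \<in> {0..<N}" for i using h that by (auto simp: bij_betw_def)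
  have hinj: "h i \<noteq> h i'" if "i \<in> {0..<N}" "i' \<in> {0..<N}" "i \<noteq> i'" for i i'
    using h that by (auto simp: bij_betw_def inj_on_def)
  have Zv: "snd (h i) \<in> Zd d2" if "i \<in> {0..<N}" for i using hJ[OF that] by (simp add: Jn_def good_def)
  have indep: "indep_vars (\<lambda>_. count_space UNIV) X {0..<N}"
  proof -
    have dj: "disjoint_family_on (\<lambda>i. cellB n a (fst (h i)) \<times> {snd (h i)}) {0..<N}"
      unfolding disjoint_family_on_def
    proof (intro ballI impI)
      fix i i' assume "i \<in> {0..<N}" "i' \<in> {0..<N}" "i \<noteq> i'"
      then have "(fst (h i), snd (h i)) \<noteq> (fst (h i'), snd (h i'))" using hinj by simp
      then show "cellB n a (fst (h i)) \<times> {snd (h i)} \<inter> cellB n a (fst (h i')) \<times> {snd (h i')} = {}"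
        by (rule cellB_disj)
    qed
    show ?thesis unfolding X_def
      by (rule pp_indep[OF pp _ _ dj]) (use Zv cellB_borel cellB_bounded in auto)
  qed
  have Xm: "X i \<in> measurable M (count_space UNIV)" if "i \<in> {0..<N}" for i
  proof -
    have "\<forall>i\<in>{0..<N}. random_variable (count_space UNIV) (X i)"
      using indep unfolding indep_vars_def2 by (rule conjunct1)
    then show ?thesis using that by blast
  qed
  have Xs: "{\<omega> \<in> space M. X i \<omega> = c} \<in> sets M" if "i \<in> {0..<N}" for i c
  proof -
    have e: "{\<omega> \<in> space M. X i \<omega> = c} = X i -` {c} \<inter> space M" by blast
    have c: "{c} \<in> sets (count_space UNIV)" by (simp only: sets_count_space Pow_UNIV UNIV_I)
    show ?thesis unfolding e by (rule measurable_sets[OF Xm[OF that] c])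
  qed
  have pr: "prob {\<omega> \<in> space M. X i \<omega> = c} = poisson_prob (measure lborel (cellB n 0 (fst (h i)))) c"
    if "i \<in> {0..<N}" for i c
  proof -
    show ?thesis unfolding X_def pp_count[OF pp cellB_borel cellB_bounded Zv[OF that], of n a "fst (h i)" c]
      cellB_measure[of n a "fst (h i)"] by (rule refl)
  qed
  have pre: "(\<lambda>\<omega>. Occ d2 n a (\<xi> \<omega>)) -` {oc} \<inter> space M = (\<Inter>i\<in>{0..<N}. {\<omega> \<in> space M. X i \<omega> = oc (h i)})"
    if oc: "oc \<in> ?A" for oc
  proof -
    have "Occ d2 n a (\<xi> \<omega>) = oc \<longleftrightarrow> (\<forall>i\<in>{0..<N}. X i \<omega> = oc (h i))" for \<omega>
    proof -
      have "Occ d2 n a (\<xi> \<omega>) = oc \<longleftrightarrow> (\<forall>j\<in>?J. card (\<xi> \<omega> \<inter> (cellB n a (fst j) \<times> {snd j})) = oc j)"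
        using oc unfolding Occ_def by (auto simp: PiE_def extensional_def fun_eq_iff)
      also have "\<dots> \<longleftrightarrow> (\<forall>i\<in>{0..<N}. X i \<omega> = oc (h i))"
      proof -
        have Jimg: "?J = h ` {0..<N}" using h by (simp add: bij_betw_def)
        show ?thesis unfolding X_def Jimg Ball_image_comp by (simp add: comp_def)
      qed
      finally show ?thesis .
    qed
    then show ?thesis using N by auto
  qed
  show meas: "(\<lambda>\<omega>. Occ d2 n a (\<xi> \<omega>)) \<in> measurable M (count_space ?A)"
  proof (subst measurable_count_space_eq_countable)
    show "countable ?A" by (intro countable_PiE finite_Jn) auto
    show "(\<lambda>\<omega>. Occ d2 n a (\<xi> \<omega>)) \<in> space M \<rightarrow> ?A \<and>
      (\<forall>oc\<in>?A. (\<lambda>\<omega>. Occ d2 n a (\<xi> \<omega>)) -` {oc} \<inter> space M \<in> sets M)"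
    proof (intro conjI ballI)
      show "(\<lambda>\<omega>. Occ d2 n a (\<xi> \<omega>)) \<in> space M \<rightarrow> ?A" unfolding Occ_def by auto
      fix oc assume oc: "oc \<in> ?A"
      show "(\<lambda>\<omega>. Occ d2 n a (\<xi> \<omega>)) -` {oc} \<inter> space M \<in> sets M"
        unfolding pre[OF oc] using N Xs by (intro sets.finite_INT) auto
    qed
  qed
  assume oc: "oc \<in> ?A"
  have "emeasure (distr M (count_space ?A) (\<lambda>\<omega>. Occ d2 n a (\<xi> \<omega>))) {oc}
      = emeasure M ((\<lambda>\<omega>. Occ d2 n a (\<xi> \<omega>)) -` {oc} \<inter> space M)"
    using oc by (intro emeasure_distr meas) auto
  also have "\<dots> = ennreal (prob (\<Inter>i\<in>{0..<N}. {\<omega> \<in> space M. X i \<omega> = oc (h i)}))"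
    unfolding pre[OF oc] by (rule emeasure_eq_measure)
  also have "prob (\<Inter>i\<in>{0..<N}. {\<omega> \<in> space M. X i \<omega> = oc (h i)}) = (\<Prod>i\<in>{0..<N}. prob {\<omega> \<in> space M. X i \<omega> = oc (h i)})"
  proof -
    have "indep_events (\<lambda>i. {\<omega> \<in> space M. X i \<omega> = oc (h i)}) {0..<N}"
      by (rule indep_eventsI_indep_vars[OF indep]) auto
    then show ?thesis unfolding indep_events_def using N by auto
  qed
  also have "\<dots> = (\<Prod>i\<in>{0..<N}. poisson_prob (measure lborel (cellB n 0 (fst (h i)))) (oc (h i)))"
    using pr by (intro prod.cong) auto
  finally show "emeasure (distr M (count_space ?A) (\<lambda>\<omega>. Occ d2 n a (\<xi> \<omega>))) {oc}
       = ennreal (\<Prod>i\<in>{0..<N}. poisson_prob (measure lborel (cellB n 0 (fst (h i)))) (oc (h i)))" .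
qed



lemma Occ_empty:
  fixes X :: "('d1::finite) point set"
  assumes "Jn d2 n = ({} :: (('d1 \<Rightarrow> int) \<times> (nat \<Rightarrow> int)) set)" shows "Occ d2 n a X = (\<lambda>_. undefined)"
  unfolding Occ_def assms by (simp add: restrict_def)

lemma core_meas:
  fixes \<xi> :: "'b \<Rightarrow> ('d1::finite) point set"
  assumes pp: "poisson_pp M d2 \<xi>"
  shows "(\<lambda>\<omega>. Occ d2 n a (\<xi> \<omega>)) \<in> measurable M (count_space (PiE (Jn d2 n) (\<lambda>_. UNIV)))"
proof (cases "Jn d2 n = ({} :: (('d1 \<Rightarrow> int) \<times> (nat \<Rightarrow> int)) set)")
  case True
  then show ?thesis unfolding Occ_empty[OF True] by (intro measurable_const) (simp add: True)
next
  case False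
  obtain h where h: "bij_betw h {0..<card (Jn d2 n :: (('d1 \<Rightarrow> int) \<times> (nat \<Rightarrow> int)) set)} (Jn d2 n :: (('d1 \<Rightarrow> int) \<times> (nat \<Rightarrow> int)) set)"
    using ex_bij_betw_nat_finite[OF finite_Jn[of d2 n]] by blast
  have "0 < card (Jn d2 n :: (('d1 \<Rightarrow> int) \<times> (nat \<Rightarrow> int)) set)" using False finite_Jn by (simp add: card_gt_0_iff)
  then show ?thesis by (rule core_one(1)[OF pp h])
qed

lemma core_distr:
  fixes \<xi> :: "'b \<Rightarrow> ('d1::finite) point set"
  assumes pp: "poisson_pp M d2 \<xi>"
  shows "distr M (count_space (PiE (Jn d2 n) (\<lambda>_. UNIV))) (\<lambda>\<omega>. Occ d2 n a (\<xi> \<omega>))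
       = distr M (count_space (PiE (Jn d2 n) (\<lambda>_. UNIV))) (\<lambda>\<omega>. Occ d2 n 0 (\<xi> \<omega>))"
proof (cases "Jn d2 n = ({} :: (('d1 \<Rightarrow> int) \<times> (nat \<Rightarrow> int)) set)")
  case True
  have "Occ d2 n a (\<xi> \<omega>) = Occ d2 n 0 (\<xi> \<omega>)" for \<omega> unfolding Occ_empty[OF True] ..
  then show ?thesis by simp
next
  case False
  let ?A = "PiE (Jn d2 n :: (('d1 \<Rightarrow> int) \<times> (nat \<Rightarrow> int)) set) (\<lambda>_. UNIV :: nat set)"
  obtain h where h: "bij_betw h {0..<card (Jn d2 n :: (('d1 \<Rightarrow> int) \<times> (nat \<Rightarrow> int)) set)} (Jn d2 n :: (('d1 \<Rightarrow> int) \<times> (nat \<Rightarrow> int)) set)"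
    using ex_bij_betw_nat_finite[OF finite_Jn[of d2 n]] by blast
  have N: "0 < card (Jn d2 n :: (('d1 \<Rightarrow> int) \<times> (nat \<Rightarrow> int)) set)" using False finite_Jn by (simp add: card_gt_0_iff)
  show ?thesis
  proof (rule measure_eqI_countable)
    show "sets (distr M (count_space ?A) (\<lambda>\<omega>. Occ d2 n a (\<xi> \<omega>))) = Pow ?A" by simp
    show "sets (distr M (count_space ?A) (\<lambda>\<omega>. Occ d2 n 0 (\<xi> \<omega>))) = Pow ?A" by simp
    show "countable ?A" by (intro countable_PiE finite_Jn) auto
    fix oc assume "oc \<in> ?A"
    then show "emeasure (distr M (count_space ?A) (\<lambda>\<omega>. Occ d2 n a (\<xi> \<omega>))) {oc}
        = emeasure (distr M (count_space ?A) (\<lambda>\<omega>. Occ d2 n 0 (\<xi> \<omega>))) {oc}"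
      using core_one(2)[OF pp h N, of oc a] core_one(2)[OF pp h N, of oc 0] by simp
  qed
qed

lemma core_int:
  fixes \<xi> :: "'b \<Rightarrow> ('d1::finite) point set"
  assumes pp: "poisson_pp M d2 \<xi>"
  shows "(\<integral>\<^sup>+\<omega>. F (Occ d2 n a (\<xi> \<omega>)) \<partial>M) = (\<integral>\<^sup>+\<omega>. F (Occ d2 n 0 (\<xi> \<omega>)) \<partial>M)"
proof -
  let ?A = "PiE (Jn d2 n :: (('d1 \<Rightarrow> int) \<times> (nat \<Rightarrow> int)) set) (\<lambda>_. UNIV :: nat set)"
  have Fm: "F \<in> borel_measurable (distr M (count_space ?A) T)" for T :: "'b \<Rightarrow> _"
  proof -
    have "sets (distr M (count_space ?A) T) = sets (count_space ?A)" by simp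
    then have "borel_measurable (distr M (count_space ?A) T) = borel_measurable (count_space ?A)"
      by (rule measurable_cong_sets) simp
    then show ?thesis by simp
  qed
  have "(\<integral>\<^sup>+\<omega>. F (Occ d2 n a (\<xi> \<omega>)) \<partial>M) = integral\<^sup>N (distr M (count_space ?A) (\<lambda>\<omega>. Occ d2 n a (\<xi> \<omega>))) F"
    by (rule nn_integral_distr[symmetric, OF core_meas[OF pp] Fm])
  also have "\<dots> = integral\<^sup>N (distr M (count_space ?A) (\<lambda>\<omega>. Occ d2 n 0 (\<xi> \<omega>))) F"
    unfolding core_distr[OF pp, of n a] ..
  also have "\<dots> = (\<integral>\<^sup>+\<omega>. F (Occ d2 n 0 (\<xi> \<omega>)) \<partial>M)"
    by (rule nn_integral_distr[OF core_meas[OF pp] Fm])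
  finally show ?thesis .
qed



lemma pp_space:
  assumes "poisson_pp M d2 \<xi>" "\<omega> \<in> space M"
  shows "\<xi> \<omega> \<subseteq> UNIV \<times> Zd d2" "bounded B \<Longrightarrow> finite (\<xi> \<omega> \<inter> (B \<times> {v}))"
proof -
  have "\<forall>\<omega>\<in>space M. \<xi> \<omega> \<subseteq> UNIV \<times> Zd d2 \<and> (\<forall>B v. bounded B \<longrightarrow> finite (\<xi> \<omega> \<inter> (B \<times> {v})))"
    using assms(1) unfolding poisson_pp_def by (rule conjunct1[OF conjunct2])
  then have *: "\<xi> \<omega> \<subseteq> UNIV \<times> Zd d2 \<and> (\<forall>B v. bounded B \<longrightarrow> finite (\<xi> \<omega> \<inter> (B \<times> {v})))"
    using assms(2) by blast
  then show "\<xi> \<omega> \<subseteq> UNIV \<times> Zd d2" by (rule conjunct1)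
  show "bounded B \<Longrightarrow> finite (\<xi> \<omega> \<inter> (B \<times> {v}))" using * by blast
qed

lemma shift_Zd: "X \<subseteq> UNIV \<times> Zd d2 \<Longrightarrow> shift a X \<subseteq> UNIV \<times> Zd d2"
  unfolding shift_def by auto

definition FF :: "nat \<Rightarrow> real \<Rightarrow> nat \<Rightarrow> ('d1::finite) point \<Rightarrow> (('d1 \<Rightarrow> int) \<times> (nat \<Rightarrow> int) \<Rightarrow> nat) \<Rightarrow> ennreal" where
  "FF d2 \<alpha> n z oc = e2ennreal (PN d2 \<alpha> n (Rep d2 n oc) z)"

lemma g_shift_eq:
  fixes \<xi> :: "'b \<Rightarrow> ('d1::finite) point set"
  assumes pp: "poisson_pp M d2 \<xi>" and \<omega>: "\<omega> \<in> space M"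
  shows "e2ennreal (PN d2 \<alpha> n (shift a (\<xi> \<omega>)) z) = FF d2 \<alpha> n z (Occ d2 n a (\<xi> \<omega>))"
proof -
  have "\<forall>j\<in>Jn d2 n. finite (shift a (\<xi> \<omega>) \<inter> (cellB n 0 (fst j) \<times> {snd j}))"
  proof
    fix j :: "('d1 \<Rightarrow> int) \<times> (nat \<Rightarrow> int)"
    show "finite (shift a (\<xi> \<omega>) \<inter> (cellB n 0 (fst j) \<times> {snd j}))"
      by (rule fin_shift[OF pp_space(2)[OF pp \<omega> cellB_bounded]])
  qed
  then have "PN d2 \<alpha> n (shift a (\<xi> \<omega>)) z = PN d2 \<alpha> n (Rep d2 n (Occ d2 n 0 (shift a (\<xi> \<omega>)))) z"
    by (rule PN_Rep)
  then show ?thesis by (simp only: FF_def Occ_shift)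
qed

lemma shift0: "shift 0 X = X"
  unfolding shift_def by (auto simp: image_iff)

lemma g_meas:
  fixes \<xi> :: "'b \<Rightarrow> ('d1::finite) point set"
  assumes pp: "poisson_pp M d2 \<xi>"
  shows "(\<lambda>\<omega>. e2ennreal (PN d2 \<alpha> n (shift a (\<xi> \<omega>)) z)) \<in> borel_measurable M"
proof -
  have Fm: "FF d2 \<alpha> n z \<in> borel_measurable (count_space (PiE (Jn d2 n) (\<lambda>_. UNIV)))"
    by (rule measurable_count_space_eq1[THEN iffD2]) simp
  have m1: "(\<lambda>\<omega>. FF d2 \<alpha> n z (Occ d2 n a (\<xi> \<omega>))) \<in> borel_measurable M"
    by (rule measurable_compose[OF core_meas[OF pp] Fm])
  have eq: "(\<lambda>\<omega>. FF d2 \<alpha> n z (Occ d2 n a (\<xi> \<omega>))) \<omega> = (\<lambda>\<omega>. e2ennreal (PN d2 \<alpha> n (shift a (\<xi> \<omega>)) z)) \<omega>"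
    if "\<omega> \<in> space M" for \<omega> using g_shift_eq[OF pp that, symmetric] by (simp only:)
  show ?thesis by (rule iffD1[OF measurable_cong[OF eq] m1])
qed

lemma SC_meas:
  fixes \<xi> :: "'b \<Rightarrow> ('d1::finite) point set"
  assumes pp: "poisson_pp M d2 \<xi>" and \<alpha>: "\<alpha> \<ge> 0"
  shows "(\<lambda>\<omega>. e2ennreal (SC d2 \<alpha> (shift a (\<xi> \<omega>)) z)) \<in> borel_measurable M"
proof -
  have m1: "(\<lambda>\<omega>. SUP n. e2ennreal (PN d2 \<alpha> n (shift a (\<xi> \<omega>)) z)) \<in> borel_measurable M"
    by (rule borel_measurable_SUP) (rule countableI_type, rule g_meas[OF pp])
  have eq: "(\<lambda>\<omega>. SUP n. e2ennreal (PN d2 \<alpha> n (shift a (\<xi> \<omega>)) z)) \<omega> = (\<lambda>\<omega>. e2ennreal (SC d2 \<alpha> (shift a (\<xi> \<omega>)) z)) \<omega>"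
    if "\<omega> \<in> space M" for \<omega>
    using e2_SC_SUP[OF \<alpha> shift_Zd[OF pp_space(1)[OF pp that]]] by (simp only:)
  show ?thesis by (rule iffD1[OF measurable_cong[OF eq] m1])
qed

lemma int_shift:
  fixes \<xi> :: "'b \<Rightarrow> ('d1::finite) point set"
  assumes pp: "poisson_pp M d2 \<xi>" and \<alpha>: "\<alpha> \<ge> 0"
  shows "(\<integral>\<^sup>+\<omega>. e2ennreal (SC d2 \<alpha> (shift a (\<xi> \<omega>)) z) \<partial>M) = (\<integral>\<^sup>+\<omega>. e2ennreal (SC d2 \<alpha> (\<xi> \<omega>) z) \<partial>M)"
proof -
  have I: "(\<integral>\<^sup>+\<omega>. e2ennreal (SC d2 \<alpha> (shift b (\<xi> \<omega>)) z) \<partial>M)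
      = (SUP n. (\<integral>\<^sup>+\<omega>. FF d2 \<alpha> n z (Occ d2 n b (\<xi> \<omega>)) \<partial>M))" for b
  proof -
    have "(\<integral>\<^sup>+\<omega>. e2ennreal (SC d2 \<alpha> (shift b (\<xi> \<omega>)) z) \<partial>M)
        = (\<integral>\<^sup>+\<omega>. (SUP n. e2ennreal (PN d2 \<alpha> n (shift b (\<xi> \<omega>)) z)) \<partial>M)"
      by (intro nn_integral_cong e2_SC_SUP[OF \<alpha> shift_Zd[OF pp_space(1)[OF pp]]])
    also have "\<dots> = (SUP n. (\<integral>\<^sup>+\<omega>. e2ennreal (PN d2 \<alpha> n (shift b (\<xi> \<omega>)) z) \<partial>M))"
    proof (rule nn_integral_monotone_convergence_SUP)
      show "incseq (\<lambda>n \<omega>. e2ennreal (PN d2 \<alpha> n (shift b (\<xi> \<omega>)) z))"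
        using PN_incseq unfolding incseq_def le_fun_def by (blast intro: e2ennreal_mono)
      show "\<And>n. (\<lambda>\<omega>. e2ennreal (PN d2 \<alpha> n (shift b (\<xi> \<omega>)) z)) \<in> borel_measurable M"
        by (rule g_meas[OF pp])
    qed
    also have "\<dots> = (SUP n. (\<integral>\<^sup>+\<omega>. FF d2 \<alpha> n z (Occ d2 n b (\<xi> \<omega>)) \<partial>M))"
      by (intro SUP_cong refl nn_integral_cong g_shift_eq[OF pp])
    finally show ?thesis .
  qed
  have "(\<integral>\<^sup>+\<omega>. FF d2 \<alpha> n z (Occ d2 n a (\<xi> \<omega>)) \<partial>M) = (\<integral>\<^sup>+\<omega>. FF d2 \<alpha> n z (Occ d2 n 0 (\<xi> \<omega>)) \<partial>M)" for n
    by (rule core_int[OF pp, of "FF d2 \<alpha> n z" n a])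
  note eq = this
  have "(\<integral>\<^sup>+\<omega>. e2ennreal (SC d2 \<alpha> (shift a (\<xi> \<omega>)) z) \<partial>M) = (SUP n. (\<integral>\<^sup>+\<omega>. FF d2 \<alpha> n z (Occ d2 n a (\<xi> \<omega>)) \<partial>M))"
    by (rule I)
  also have "\<dots> = (SUP n. (\<integral>\<^sup>+\<omega>. FF d2 \<alpha> n z (Occ d2 n 0 (\<xi> \<omega>)) \<partial>M))"
    by (simp only: eq)
  also have "\<dots> = (\<integral>\<^sup>+\<omega>. e2ennreal (SC d2 \<alpha> (shift 0 (\<xi> \<omega>)) z) \<partial>M)"
    by (rule I[symmetric])
  also have "\<dots> = (\<integral>\<^sup>+\<omega>. e2ennreal (SC d2 \<alpha> (\<xi> \<omega>) z) \<partial>M)"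
    by (simp only: shift0)
  finally show ?thesis .
qed





lemma fekete_mono:
  fixes f :: "real \<Rightarrow> ennreal"
  assumes sup: "\<And>s t. 0 < s \<Longrightarrow> 0 < t \<Longrightarrow> f s + f t \<le> f (s + t)"
    and "0 < u" "u \<le> t"
  shows "f u \<le> f t"
proof (cases "u = t")
  case False
  then have "0 < t - u" using assms by simp
  have "f u \<le> f u + f (t - u)" by simp
  also have "\<dots> \<le> f (u + (t - u))" by (rule sup[OF \<open>0 < u\<close> \<open>0 < t - u\<close>])
  finally show ?thesis by simp
qed simp

lemma fekete_mult:
  fixes f :: "real \<Rightarrow> ennreal"
  assumes sup: "\<And>s t. 0 < s \<Longrightarrow> 0 < t \<Longrightarrow> f s + f t \<le> f (s + t)"
    and s: "0 < s"
  shows "of_nat (Suc n) * f s \<le> f (real (Suc n) * s)"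
proof (induction n)
  case 0 then show ?case by simp
next
  case (Suc n)
  have "of_nat (Suc (Suc n)) * f s = of_nat (Suc n) * f s + f s" by (simp add: algebra_simps)
  also have "\<dots> \<le> f (real (Suc n) * s) + f s" using Suc by (simp add: add_right_mono)
  also have "\<dots> \<le> f (real (Suc n) * s + s)" using s by (intro sup) auto
  also have "real (Suc n) * s + s = real (Suc (Suc n)) * s" by (simp add: algebra_simps)
  finally show ?case .
qed

lemma fekete:
  fixes f :: "real \<Rightarrow> ennreal"
  assumes sup: "\<And>s t. 0 < s \<Longrightarrow> 0 < t \<Longrightarrow> f s + f t \<le> f (s + t)"
  shows "((\<lambda>t. f t / ennreal t) \<longlongrightarrow> (SUP t\<in>{0<..}. f t / ennreal t)) at_top"
proof (rule order_tendstoI)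
  let ?L = "SUP t\<in>{0<..}. f t / ennreal t"
  fix y assume "?L < y"
  have "eventually (\<lambda>t. (0::real) < t) at_top" by (rule eventually_gt_at_top)
  then show "eventually (\<lambda>t. f t / ennreal t < y) at_top"
  proof eventually_elim
    case (elim t)
    then have "f t / ennreal t \<le> ?L" by (intro SUP_upper) auto
    then show ?case using \<open>?L < y\<close> by simp
  qed
next
  let ?L = "SUP t\<in>{0<..}. f t / ennreal t"
  fix y assume "y < ?L"
  then obtain s where s: "0 < s" and ys: "y < f s / ennreal s" by (auto simp: less_SUP_iff)
  show "eventually (\<lambda>t. y < f t / ennreal t) at_top"
  proof (cases "f s = top")
    case True
    have "eventually (\<lambda>t. s \<le> t) at_top" by (rule eventually_ge_at_top)
    then show ?thesis
    proof eventually_elim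
      case (elim t)
      then have "f s \<le> f t" using s by (intro fekete_mono[OF sup]) auto
      then have "f t = top" using True by (simp add: top_unique)
      then have "f t / ennreal t = top" by (simp add: ennreal_top_divide)
      moreover have "y < top" using ys True by (auto simp: ennreal_top_divide)
      ultimately show ?case by simp
    qed
  next
    case False
    define q where "q = enn2real (f s)"
    have q0: "0 \<le> q" unfolding q_def by simp
    have fq: "f s = ennreal q" unfolding q_def using False by (simp add: ennreal_enn2real_if less_top)
    have "y < ennreal (q / s)" using ys fq divide_ennreal[OF q0 s] by simp
    then obtain y' where y': "y = ennreal y'" "0 \<le> y'" "y' < q / s"
      by (cases y) (auto simp: ennreal_less_iff)
    define \<epsilon> where "\<epsilon> = q / s - y'"
    have \<epsilon>: "0 < \<epsilon>" using y' unfolding \<epsilon>_def by simp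
    have "eventually (\<lambda>t. max s (q / \<epsilon>) < t) at_top" by (rule eventually_gt_at_top)
    then show ?thesis
    proof eventually_elim
      case (elim t)
      then have st: "s < t" and qt: "q / \<epsilon> < t" by auto
      have t0: "0 < t" using st s by simp
      define n where "n = nat \<lfloor>t / s\<rfloor>"
      have "1 \<le> t / s" using st s by simp
      then have n1: "1 \<le> n" unfolding n_def by linarith
      have ns: "real n * s \<le> t"
      proof -
        have "real n \<le> t / s" unfolding n_def using \<open>1 \<le> t / s\<close> by linarith
        then show ?thesis using s by (simp add: le_divide_eq)
      qed
      have nlow: "t / s - 1 < real n" unfolding n_def using \<open>1 \<le> t / s\<close> by linarith
      obtain m where m: "n = Suc m" using n1 by (cases n) auto
      have "ennreal (real n * q) = of_nat n * f s"
        using fq q0 by (simp add: ennreal_mult ennreal_of_nat_eq_real_of_nat)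
      also have "\<dots> \<le> f (real n * s)" unfolding m by (rule fekete_mult[OF sup s])
      also have "\<dots> \<le> f t" using s n1 ns by (intro fekete_mono[OF sup]) auto
      finally have "ennreal (real n * q) / ennreal t \<le> f t / ennreal t" by (rule divide_right_mono_ennreal)
      moreover have "ennreal (real n * q) / ennreal t = ennreal (real n * q / t)"
        using q0 t0 by (intro divide_ennreal) auto
      moreover have "y' < real n * q / t"
      proof -
        have "(t / s - 1) * q \<le> real n * q" using nlow q0 by (intro mult_right_mono) auto
        then have "(t / s - 1) * q / t \<le> real n * q / t" using t0 by (simp add: divide_right_mono)
        moreover have "(t / s - 1) * q / t = q / s - q / t" using t0 s by (simp add: field_simps)
        moreover have "q / t < \<epsilon>" using qt \<epsilon> t0 by (simp add: divide_less_eq mult.commute)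
        ultimately show ?thesis unfolding \<epsilon>_def by linarith
      qed
      ultimately have "ennreal (real n * q / t) \<le> f t / ennreal t" "ennreal y' < ennreal (real n * q / t)"
        using y' by (auto simp: ennreal_less_iff)
      then show ?case using y' by (metis order_less_le_trans)
    qed
  qed
qed


lemma ESC_superadd:
  fixes \<xi> :: "'b \<Rightarrow> ('d1::finite) point set"
  assumes pp: "poisson_pp M d2 \<xi>" and \<alpha>: "\<alpha> \<ge> 0" and a: "\<forall>i. 0 \<le> a $ i" and b: "\<forall>i. 0 \<le> b $ i"
  shows "ESC M d2 \<xi> \<alpha> (a, \<lambda>_. 0) + ESC M d2 \<xi> \<alpha> (b, \<lambda>_. 0) \<le> ESC M d2 \<xi> \<alpha> (a + b, \<lambda>_. 0)"
proof -
  have m1: "(\<lambda>\<omega>. e2ennreal (SC d2 \<alpha> (\<xi> \<omega>) (a, \<lambda>_. 0))) \<in> borel_measurable M"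
    using SC_meas[OF pp \<alpha>, of 0 "(a, \<lambda>_. 0)"] by (simp only: shift0)
  have m2: "(\<lambda>\<omega>. e2ennreal (SC d2 \<alpha> (shift a (\<xi> \<omega>)) (b, \<lambda>_. 0))) \<in> borel_measurable M"
    by (rule SC_meas[OF pp \<alpha>])
  have eb: "ESC M d2 \<xi> \<alpha> (b, \<lambda>_. 0) = (\<integral>\<^sup>+\<omega>. e2ennreal (SC d2 \<alpha> (shift a (\<xi> \<omega>)) (b, \<lambda>_. 0)) \<partial>M)"
    unfolding ESC_def by (rule int_shift[OF pp \<alpha>, symmetric])
  have "ESC M d2 \<xi> \<alpha> (a, \<lambda>_. 0) + ESC M d2 \<xi> \<alpha> (b, \<lambda>_. 0)
     = (\<integral>\<^sup>+\<omega>. e2ennreal (SC d2 \<alpha> (\<xi> \<omega>) (a, \<lambda>_. 0)) \<partial>M) + (\<integral>\<^sup>+\<omega>. e2ennreal (SC d2 \<alpha> (shift a (\<xi> \<omega>)) (b, \<lambda>_. 0)) \<partial>M)"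
    unfolding eb by (simp only: ESC_def)
  also have "\<dots> = (\<integral>\<^sup>+\<omega>. e2ennreal (SC d2 \<alpha> (\<xi> \<omega>) (a, \<lambda>_. 0)) + e2ennreal (SC d2 \<alpha> (shift a (\<xi> \<omega>)) (b, \<lambda>_. 0)) \<partial>M)"
    by (rule nn_integral_add[symmetric, OF m1 m2])
  also have "\<dots> \<le> (\<integral>\<^sup>+\<omega>. e2ennreal (SC d2 \<alpha> (\<xi> \<omega>) (a + b, \<lambda>_. 0)) \<partial>M)"
    by (intro nn_integral_mono SC_superadd[OF a b])
  finally show ?thesis unfolding ESC_def .
qed

lemma ESC_pos:
  fixes \<xi> :: "'b \<Rightarrow> ('d1::finite) point set"
  assumes pp: "poisson_pp M d2 \<xi>" and x: "\<forall>i. x $ i > 0" and \<alpha>: "\<alpha> \<ge> 0"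
  shows "\<exists>t>0. 0 < ESC M d2 \<xi> \<alpha> (t *\<^sub>R x, \<lambda>_. 0) / ennreal t"
proof -
  interpret prob_space M using pp unfolding poisson_pp_def by (rule conjunct1)
  define c where "c = \<alpha> powr (1 / real CARD('d1))"
  have c0: "0 \<le> c" unfolding c_def by simp
  define t where "t = (1 + c) * (\<Sum>i\<in>UNIV. 1 / x $ i) + 1"
  have tx: "1 + c < t * x $ i" for i
  proof -
    have "1 / x $ i \<le> (\<Sum>j\<in>UNIV. 1 / x $ j)" using x by (intro member_le_sum) (auto simp: less_imp_le)
    then have "(1 + c) * (1 / x $ i) \<le> (1 + c) * (\<Sum>j\<in>UNIV. 1 / x $ j)" using c0 by (intro mult_left_mono) auto
    then have h2: "(1 + c) * (1 / x $ i) * x $ i \<le> (1 + c) * (\<Sum>j\<in>UNIV. 1 / x $ j) * x $ i"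
      using x[rule_format, of i] by (intro mult_right_mono) auto
    have h3: "(1 + c) * (1 / x $ i) * x $ i = 1 + c" using x[rule_format, of i] by simp
    have h4: "t * x $ i = (1 + c) * (\<Sum>j\<in>UNIV. 1 / x $ j) * x $ i + x $ i"
      unfolding t_def by (simp add: algebra_simps)
    show ?thesis using h2 h3 h4 x[rule_format, of i] by linarith
  qed
  have t0: "0 < t"
  proof -
    have "0 \<le> (\<Sum>i\<in>UNIV. 1 / x $ i)" using x by (intro sum_nonneg) (auto simp: less_imp_le)
    then have "0 \<le> (1 + c) * (\<Sum>i\<in>UNIV. 1 / x $ i)" using c0 by (intro mult_nonneg_nonneg) auto
    then show ?thesis unfolding t_def by linarith
  qed
  define B where "B = box (0::real^'d1) One"
  define m where "m = measure lborel B"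
  have Bs: "B \<in> sets lborel" unfolding B_def by simp
  have Bb: "bounded B" unfolding B_def by (rule bounded_box)
  have m0: "0 < m"
  proof -
    have "m = (\<Prod>b\<in>Basis. (One - 0) \<bullet> (b::real^'d1))"
      unfolding m_def B_def measure_lborel_box_eq by simp
    also have "\<dots> = 1"
    proof (rule prod.neutral, rule ballI)
      fix b :: "real^'d1" assume "b \<in> Basis"
      then show "(One - 0) \<bullet> b = 1" by simp
    qed
    finally show ?thesis by simp
  qed
  have Z0: "(\<lambda>_. 0::int) \<in> Zd d2" by (simp add: Zd_def)
  define E0 where "E0 = {\<omega>\<in>space M. card (\<xi> \<omega> \<inter> (B \<times> {\<lambda>_. 0})) = 0}"
  have pE0: "prob E0 = exp (- m)"
    unfolding E0_def m_def using pp_count[OF pp Bs Bb Z0, of 0] by (simp add: poisson_prob_def)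
  have E0s: "E0 \<in> sets M"
  proof (rule ccontr)
    assume "E0 \<notin> sets M"
    then have "prob E0 = 0" by (rule measure_notin_sets)
    then show False using pE0 by simp
  qed
  define E where "E = space M - E0"
  have Es: "E \<in> sets M" unfolding E_def using E0s by auto
  have pE: "prob E = 1 - exp (- m)" unfolding E_def using prob_compl[OF E0s] pE0 by simp
  have pE0': "0 < prob E" unfolding pE using m0 by simp
  have ind: "indicator E \<omega> \<le> e2ennreal (SC d2 \<alpha> (\<xi> \<omega>) (t *\<^sub>R x, \<lambda>_. 0))" if "\<omega> \<in> space M" for \<omega>
  proof (cases "\<omega> \<in> E")
    case False then show ?thesis by simp
  next
    case True
    then have "card (\<xi> \<omega> \<inter> (B \<times> {\<lambda>_. 0})) \<noteq> 0" unfolding E_def E0_def by auto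
    then obtain w where w: "w \<in> \<xi> \<omega>" "fst w \<in> B" "snd w = (\<lambda>_. 0)"
      by (metis (no_types, lifting) Int_emptyI SigmaE card.empty prod.sel singletonD)
    have one: "(One::real^'d1) $ i = 1" for i
    proof -
      have "axis i (1::real) \<in> Basis" by simp
      then have "One \<bullet> axis i (1::real) = 1" by (rule inner_sum_Basis)
      then show ?thesis by (simp only: cart_eq_inner_axis[of One i])
    qed
    have wi: "0 < fst w $ i \<and> fst w $ i < 1" for i using w(2) unfolding B_def mem_box_cart one by simp
    have ch: "[w] \<in> chains \<alpha> (\<xi> \<omega>) (t *\<^sub>R x, \<lambda>_. 0)"
      unfolding chains_def
    proof (intro CollectI conjI impI allI)
      show "set [w] \<subseteq> \<xi> \<omega>" using w by simp
      show "preceq (0, \<lambda>_. 0) (hd [w])" using wi by (simp add: preceq_def less_imp_le)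
      show "prec \<alpha> (last [w]) (t *\<^sub>R x, \<lambda>_. 0)"
        unfolding prec_def c_def[symmetric] using wi tx by (simp add: add.commute) (smt (verit) wi tx)
    next
      fix i assume "Suc i < length [w]" then show "prec \<alpha> ([w] ! i) ([w] ! Suc i)" by simp
    qed
    have v: "Vcost d2 (t *\<^sub>R x, \<lambda>_. 0) [w] = 0"
      unfolding Vcost_pcost using w(3) by (simp add: l1norm_def)
    have "ereal (real (length [w]) - Vcost d2 (t *\<^sub>R x, \<lambda>_. 0) [w]) \<le> SC d2 \<alpha> (\<xi> \<omega>) (t *\<^sub>R x, \<lambda>_. 0)"
      unfolding SC_def using SUP_upper[OF ch, of "\<lambda>ws. ereal (real (length ws) - Vcost d2 (t *\<^sub>R x, \<lambda>_. 0) ws)"] by simp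
    then have "ereal 1 \<le> SC d2 \<alpha> (\<xi> \<omega>) (t *\<^sub>R x, \<lambda>_. 0)" using v by simp
    then have "e2ennreal (ereal 1) \<le> e2ennreal (SC d2 \<alpha> (\<xi> \<omega>) (t *\<^sub>R x, \<lambda>_. 0))" by (rule e2ennreal_mono)
    then show ?thesis using True by simp
  qed
  have "ennreal (prob E) = (\<integral>\<^sup>+\<omega>. indicator E \<omega> \<partial>M)"
    using Es by (simp add: emeasure_eq_measure)
  also have "\<dots> \<le> ESC M d2 \<xi> \<alpha> (t *\<^sub>R x, \<lambda>_. 0)"
    unfolding ESC_def by (rule nn_integral_mono) (rule ind)
  finally have "0 < ESC M d2 \<xi> \<alpha> (t *\<^sub>R x, \<lambda>_. 0)" using pE0'
    by (metis ennreal_eq_0_iff not_gr_zero order_le_less_trans order_less_le measure_nonneg)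
  then have "0 < ESC M d2 \<xi> \<alpha> (t *\<^sub>R x, \<lambda>_. 0) / ennreal t"
    by (simp add: ennreal_zero_less_divide)
  then show ?thesis using t0 by blast
qed

theorem mainTheorem8:
  fixes M :: "'a measure" and d2 :: nat and \<xi> :: "'a \<Rightarrow> ('d1::finite) point set"
    and x :: "real^'d1" and \<alpha> :: real
  assumes "poisson_pp M d2 \<xi>"
    and "\<forall>i. x $ i > 0"
    and "\<alpha> \<ge> 0"
  shows "((\<lambda>t::real. ESC M d2 \<xi> \<alpha> (t *\<^sub>R x, (\<lambda>_. 0)) / ennreal t) \<longlongrightarrow>
            (SUP t\<in>{0<..}. ESC M d2 \<xi> \<alpha> (t *\<^sub>R x, (\<lambda>_. 0)) / ennreal t)) at_top
         \<and> (SUP t\<in>{0<..}. ESC M d2 \<xi> \<alpha> (t *\<^sub>R x, (\<lambda>_. 0)) / ennreal t) > 0"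
proof
  define f where "f t = ESC M d2 \<xi> \<alpha> (t *\<^sub>R x, (\<lambda>_. 0))" for t
  have sup: "f s + f t \<le> f (s + t)" if "0 < s" "0 < t" for s t
  proof -
    have a: "\<forall>i. 0 \<le> (s *\<^sub>R x) $ i" and b: "\<forall>i. 0 \<le> (t *\<^sub>R x) $ i"
      using that assms(2) by (auto simp: less_imp_le)
    show ?thesis unfolding f_def scaleR_add_left by (rule ESC_superadd[OF assms(1) assms(3) a b])
  qed
  show "((\<lambda>t::real. ESC M d2 \<xi> \<alpha> (t *\<^sub>R x, (\<lambda>_. 0)) / ennreal t) \<longlongrightarrow>
            (SUP t\<in>{0<..}. ESC M d2 \<xi> \<alpha> (t *\<^sub>R x, (\<lambda>_. 0)) / ennreal t)) at_top"
    using fekete[of f, OF sup] unfolding f_def by simp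
  obtain t where t: "0 < t" "0 < ESC M d2 \<xi> \<alpha> (t *\<^sub>R x, \<lambda>_. 0) / ennreal t"
    using ESC_pos[OF assms] by blast
  show "(SUP t\<in>{0<..}. ESC M d2 \<xi> \<alpha> (t *\<^sub>R x, (\<lambda>_. 0)) / ennreal t) > 0"
    using t by (auto simp: less_SUP_iff)
qed


end
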